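(* In the setting described in the context, assume in addition that $H(\mathbf{p})\neq 0$ for every $\mathbf{p}\in\mathbb{D}$, and let $\widetilde{r}$ be the real field with discrete Fourier coefficients $\widetilde{R}(\mathbf{p})=R(\mathbf{p})/H(\mathbf{p})$. Then for every $\mathbf{p}\in\mathbb{D}$, $$\mathsf{E}[|\widehat{S}(\mathbf{p})-S(\mathbf{p})|^2]=\mathsf{E}[|\widehat{S}(\mathbf{p})-\widetilde{R}(\mathbf{p})|^2]-\frac{\gamma D}{|H(\mathbf{p})|^2}+2\gamma\sum_{\ell=1}^L\mathsf{E}[\Theta_\ell'(r_\ell)]\,\mathrm{Re}\Big\{\frac{\Phi_\ell(\mathbf{p})\,\big(\widetilde{\Phi}_\ell(\mathbf{p})\big)^*}{H(\mathbf{p})}\Big\},$$ and $$\mathsf{E}[\mathcal{E}(\widehat{s}-s)]=\mathsf{E}[\mathcal{E}(\widehat{s}-\widetilde{r})]+\frac{\gamma}{D}\Big(2\sum_{\ell=1}^L\mathsf{E}[\Theta_\ell'(r_\ell)]\,\overline{\gamma}_\ell-\sum_{\mathbf{p}\in\mathbb{D}}|H(\mathbf{p})|^{-2}\Big),$$ where $\overline{\gamma}_\ell=\frac{1}{D}\sum_{\mathbf{p}\in\mathbb{D}}\frac{\Phi_\ell(\mathbf{p})(\widetilde{\Phi}_\ell(\mathbf{p}))^*}{H(\mathbf{p})}$, and each $\overline{\gamma}_\ell$ is real.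
   Context: Let $d,D_1,\dots,D_d$ be positive integers, $\mathbb{D}=\{0,\dots,D_1-1\}\times\cdots\times\{0,\dots,D_d-1\}$, $D=D_1\cdots D_d$, $\boldsymbol{D}=\mathrm{Diag}(D_1,\dots,D_d)$. For a field $f\colon\mathbb{D}\to\mathbb{R}$ its discrete Fourier transform is $F(\mathbf{p})=\sum_{\mathbf{x}\in\mathbb{D}}f(\mathbf{x})\exp(-2\pi\imath\,\mathbf{x}^\top\boldsymbol{D}^{-1}\mathbf{p})$, $\mathbf{p}\in\mathbb{D}$ (capital letters denote DFTs of the corresponding lowercase fields). $s$ is a real random field on $\mathbb{D}$ with finite variance; $h$ is a deterministic real field on $\mathbb{D}$ with DFT $H$; $n$ is a zero-mean Gaussian random field on $\mathbb{D}$ independent of $s$ with $\mathsf{E}[n(\mathbf{x})n(\mathbf{y})]=\gamma\,\delta_{\mathbf{x}-\mathbf{y}}$ ($\gamma>0$, $\delta$ the Kronecker sequence). The observation is $r(\mathbf{x})=\sum_{\mathbf{y}\in\mathbb{D}}\widetilde{h}(\mathbf{x}-\mathbf{y})s(\mathbf{y})+n(\mathbf{x})$, where $\widetilde{h}$ is the periodic extension of $h$ to $\mathbb{Z}^d$; thus $R(\mathbf{p})=H(\mathbf{p})S(\mathbf{p})+N(\mathbf{p})$. Let $L\ge1$ and let $(\varphi_\ell)_{1\le\ell\le L}$ (analysis) and $(\widetilde{\varphi}_\ell)_{1\le\ell\le L}$ (synthesis) be families of real fields on $\mathbb{D}$ with DFTs $\Phi_\ell,\widetilde{\Phi}_\ell$.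 Set $r_\ell=\langle r,\varphi_\ell\rangle=\sum_{\mathbf{x}}r(\mathbf{x})\varphi_\ell(\mathbf{x})$, $\widehat{s}_\ell=\Theta_\ell(r_\ell)$, $\widehat{s}=\sum_{\ell=1}^L\widehat{s}_\ell\widetilde{\varphi}_\ell$ (so $\widehat{S}(\mathbf{p})=\sum_\ell\widehat{s}_\ell\widetilde{\Phi}_\ell(\mathbf{p})$), where each $\Theta_\ell\colon\mathbb{R}\to\mathbb{R}$ is continuous, almost everywhere differentiable with derivative $\Theta_\ell'$, satisfies $\lim_{|\zeta|\to\infty}\Theta_\ell(\tau+\zeta)\zeta^2\exp(-\zeta^2/(2\alpha^2))=0$ for all $\alpha\neq0$, $\tau\in\mathbb{R}$, and $\mathsf{E}[|\Theta_\ell(r_\ell)|^3]<\infty$, $\mathsf{E}[|\Theta_\ell'(r_\ell)|^3]<\infty$. For a real field $f$ on $\mathbb{D}$, $\mathcal{E}(f)=\frac1D\sum_{\mathbf{x}\in\mathbb{D}}f(\mathbf{x})^2$. $(\cdot)^*$ is complex conjugation.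
   Formalization: Each $\Theta_\ell$ is also locally absolutely continuous, with $\Theta_\ell'$ integrable on every [a,b] and $\Theta_\ell(b)-\Theta_\ell(a)$ equal to the integral of $\Theta_\ell'$ over [a,b]. The statement above fails without it. *)

theory Defs
  imports "HOL-Probability.Probability"
begin

text \<open>Grid points of D = {0..D_1-1} x ... x {0..D_d-1}, represented as functions
  nat => nat that are extensional (zero) outside the coordinates 0..d-1
  (coordinate i here corresponds to coordinate i+1 of the paper).\<close>
definition grid :: "nat \<Rightarrow> (nat \<Rightarrow> nat) \<Rightarrow> (nat \<Rightarrow> nat) set" where
  "grid d Ds = {x. (\<forall>i<d. x i < Ds i) \<and> (\<forall>i. d \<le> i \<longrightarrow> x i = 0)}"

definition gridsize :: "nat \<Rightarrow> (nat \<Rightarrow> nat) \<Rightarrow> nat" where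
  "gridsize d Ds = (\<Prod>i<d. Ds i)"

definition phase :: "nat \<Rightarrow> (nat \<Rightarrow> nat) \<Rightarrow> (nat \<Rightarrow> nat) \<Rightarrow> (nat \<Rightarrow> nat) \<Rightarrow> real" where
  "phase d Ds x p = (\<Sum>i<d. real (x i) * real (p i) / real (Ds i))"

definition dft :: "nat \<Rightarrow> (nat \<Rightarrow> nat) \<Rightarrow> ((nat \<Rightarrow> nat) \<Rightarrow> real) \<Rightarrow> (nat \<Rightarrow> nat) \<Rightarrow> complex" where
  "dft d Ds f p = (\<Sum>x\<in>grid d Ds. complex_of_real (f x) * cis (- 2 * pi * phase d Ds x p))"

definition idft :: "nat \<Rightarrow> (nat \<Rightarrow> nat) \<Rightarrow> ((nat \<Rightarrow> nat) \<Rightarrow> complex) \<Rightarrow> (nat \<Rightarrow> nat) \<Rightarrow> complex" where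
  "idft d Ds F x = (\<Sum>p\<in>grid d Ds. F p * cis (2 * pi * phase d Ds x p)) / of_nat (gridsize d Ds)"

definition pext :: "nat \<Rightarrow> (nat \<Rightarrow> nat) \<Rightarrow> ((nat \<Rightarrow> nat) \<Rightarrow> real) \<Rightarrow> (nat \<Rightarrow> int) \<Rightarrow> real" where
  "pext d Ds h z = h (\<lambda>i. if i < d then nat (z i mod int (Ds i)) else 0)"

definition circ_conv :: "nat \<Rightarrow> (nat \<Rightarrow> nat) \<Rightarrow> ((nat \<Rightarrow> nat) \<Rightarrow> real) \<Rightarrow> ((nat \<Rightarrow> nat) \<Rightarrow> real) \<Rightarrow> (nat \<Rightarrow> nat) \<Rightarrow> real" where
  "circ_conv d Ds h s x = (\<Sum>y\<in>grid d Ds. pext d Ds h (\<lambda>i. int (x i) - int (y i)) * s y)"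

definition ip :: "nat \<Rightarrow> (nat \<Rightarrow> nat) \<Rightarrow> ((nat \<Rightarrow> nat) \<Rightarrow> real) \<Rightarrow> ((nat \<Rightarrow> nat) \<Rightarrow> real) \<Rightarrow> real" where
  "ip d Ds f g = (\<Sum>x\<in>grid d Ds. f x * g x)"

definition energy :: "nat \<Rightarrow> (nat \<Rightarrow> nat) \<Rightarrow> ((nat \<Rightarrow> nat) \<Rightarrow> real) \<Rightarrow> real" where
  "energy d Ds f = (\<Sum>x\<in>grid d Ds. (f x)\<^sup>2) / real (gridsize d Ds)"

end

theory Submission
  imports Defs "HOL-Real_Asymp.Real_Asymp"
begin

definition gext :: "nat \<Rightarrow> (nat \<Rightarrow> nat) \<Rightarrow> nat \<Rightarrow> nat" where
  "gext d e = (\<lambda>i. if i < d then e i else 0)"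

lemma grid_eq: "grid d Ds = gext d ` PiE {..<d} (\<lambda>i. {..<Ds i})"
proof
  show "grid d Ds \<subseteq> gext d ` PiE {..<d} (\<lambda>i. {..<Ds i})"
  proof
    fix x assume x: "x \<in> grid d Ds"
    have "x = gext d (restrict x {..<d})" using x by (auto simp: gext_def grid_def fun_eq_iff)
    moreover have "restrict x {..<d} \<in> PiE {..<d} (\<lambda>i. {..<Ds i})" using x by (auto simp: grid_def)
    ultimately show "x \<in> gext d ` PiE {..<d} (\<lambda>i. {..<Ds i})" by blast
  qed
  show "gext d ` PiE {..<d} (\<lambda>i. {..<Ds i}) \<subseteq> grid d Ds"
    by (auto simp: gext_def grid_def PiE_def Pi_def)
qed

lemma inj_gext: "inj_on (gext d) (PiE {..<d} B)"
  by (auto simp: inj_on_def gext_def fun_eq_iff PiE_def extensional_def) (metis lessThan_iff)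

lemma finite_grid[simp]: "finite (grid d Ds)"
  unfolding grid_eq by (intro finite_imageI finite_PiE) auto

lemma sum_grid_prod:
  fixes f :: "nat \<Rightarrow> nat \<Rightarrow> 'c::comm_semiring_1"
  shows "(\<Sum>x\<in>grid d Ds. \<Prod>i<d. f i (x i)) = (\<Prod>i<d. \<Sum>j<Ds i. f i j)"
proof -
  have "(\<Sum>x\<in>grid d Ds. \<Prod>i<d. f i (x i)) = (\<Sum>e\<in>PiE {..<d} (\<lambda>i. {..<Ds i}). \<Prod>i<d. f i (gext d e i))"
    unfolding grid_eq by (subst sum.reindex[OF inj_gext]) (simp add: comp_def)
  also have "\<dots> = (\<Sum>e\<in>PiE {..<d} (\<lambda>i. {..<Ds i}). \<Prod>i<d. f i (e i))"
    by (intro sum.cong refl prod.cong) (auto simp: gext_def)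
  also have "\<dots> = (\<Prod>i<d. \<Sum>j<Ds i. f i j)"
    by (rule prod_sum_PiE[symmetric]) auto
  finally show ?thesis .
qed

lemma zero_grid: "(\<lambda>_. 0) \<in> grid d Ds" if "\<forall>i<d. Ds i > 0"
  using that by (auto simp: grid_def)

lemma phase_sym: "phase d Ds x p = phase d Ds p x"
  by (simp add: phase_def mult.commute)

lemma cis_2pi_sum: fixes d :: nat shows "cis (2*pi*(\<Sum>i<d. t i)) = (\<Prod>i<d. cis (2*pi*t i))"
  by (induct d) (auto simp: cis_mult[symmetric] distrib_left)

lemma geom_cis_zero:
  assumes D: "0 < D" and k: "k \<noteq> 0" "\<bar>k\<bar> < int D"
  shows "(\<Sum>j<D. cis (2*pi*(real j * real_of_int k / real D))) = 0"
proof -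
  define w where "w = cis (2*pi*real_of_int k / real D)"
  have pw: "cis (2*pi*(real j * real_of_int k / real D)) = w ^ j" for j
    unfolding w_def by (subst Complex.DeMoivre) (simp add: field_simps)
  have wD: "w ^ D = 1"
  proof -
    have "w ^ D = cis (2*pi*real_of_int k)" unfolding w_def Complex.DeMoivre using D
      by (simp add: field_simps)
    also have "\<dots> = 1" by (rule cis_multiple_2pi) simp
    finally show ?thesis .
  qed
  have "w \<noteq> 1"
  proof
    assume "w = 1"
    then have "cos (2*pi*real_of_int k / real D) = 1" unfolding w_def
      by (metis cis.sel(1) one_complex.sel(1))
    then obtain m::int where m: "2*pi*real_of_int k / real D = 2*pi*m"
      by (auto simp: cos_one_2pi_int)
    then have "real_of_int k = real D * m" using D by (simp add: field_simps)
    then have "k = int D * m" by (metis of_int_eq_iff of_int_mult of_int_of_nat_eq)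
    with k show False
      by (cases "m = 0") (auto simp: abs_mult dest!: mult_strict_left_mono[of 1 "\<bar>m\<bar>" "int D"])
  qed
  then show ?thesis unfolding pw sum_gp_strict using wD by simp
qed

lemma cis_phase_diff:
  "cis (2*pi*phase d Ds x p) * cis (-2*pi*phase d Ds x q)
   = (\<Prod>i<d. cis (2*pi*(real (x i) * real_of_int (int (p i) - int (q i)) / real (Ds i))))"
proof -
  have "cis (2*pi*phase d Ds x p) * cis (-2*pi*phase d Ds x q) = cis (2*pi*(phase d Ds x p - phase d Ds x q))"
    by (simp add: cis_mult algebra_simps)
  also have "phase d Ds x p - phase d Ds x q = (\<Sum>i<d. real (x i) * real_of_int (int (p i) - int (q i)) / real (Ds i))"
    unfolding phase_def sum_subtractf[symmetric] by (intro sum.cong refl) (simp add: diff_divide_distrib algebra_simps)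
  finally show ?thesis by (simp add: cis_2pi_sum)
qed

lemma ortho:
  assumes Ds: "\<forall>i<d. Ds i > 0" and p: "p \<in> grid d Ds" and q: "q \<in> grid d Ds"
  shows "(\<Sum>x\<in>grid d Ds. cis (2*pi*phase d Ds x p) * cis (-2*pi*phase d Ds x q))
         = (if p = q then of_nat (gridsize d Ds) else 0)"
proof -
  have "(\<Sum>x\<in>grid d Ds. cis (2*pi*phase d Ds x p) * cis (-2*pi*phase d Ds x q))
     = (\<Prod>i<d. \<Sum>j<Ds i. cis (2*pi*(real j * real_of_int (int (p i) - int (q i)) / real (Ds i))))"
    unfolding cis_phase_diff by (rule sum_grid_prod)
  also have "\<dots> = (if p = q then of_nat (gridsize d Ds) else 0)"
  proof (cases "p = q")
    case True
    then show ?thesis by (simp add: gridsize_def)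
  next
    case False
    then obtain i where i: "i < d" "p i \<noteq> q i"
      using p q by (auto simp: grid_def fun_eq_iff) (metis not_le)
    have "(\<Sum>j<Ds i. cis (2*pi*(real j * real_of_int (int (p i) - int (q i)) / real (Ds i)))) = 0"
      by (rule geom_cis_zero) (use i p q Ds in \<open>auto simp: grid_def abs_if\<close>)
    then show ?thesis using False i by (auto intro!: prod_zero bexI[of _ i])
  qed
  finally show ?thesis .
qed

lemma gridsize_pos: "\<forall>i<d. Ds i > 0 \<Longrightarrow> gridsize d Ds > 0"
  by (simp add: gridsize_def)

lemma inv1:
  assumes Ds: "\<forall>i<d. Ds i > 0" and q: "q \<in> grid d Ds"
  shows "(\<Sum>x\<in>grid d Ds. idft d Ds G x * cis (-2*pi*phase d Ds x q)) = G q"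
proof -
  have D: "(of_nat (gridsize d Ds)::complex) \<noteq> 0" using gridsize_pos[OF Ds] by simp
  have "(\<Sum>x\<in>grid d Ds. idft d Ds G x * cis (-2*pi*phase d Ds x q))
      = (\<Sum>p\<in>grid d Ds. G p * (\<Sum>x\<in>grid d Ds. cis (2*pi*phase d Ds x p) * cis (-2*pi*phase d Ds x q))) / of_nat (gridsize d Ds)"
  proof -
    have "(\<Sum>x\<in>grid d Ds. idft d Ds G x * cis (-2*pi*phase d Ds x q))
        = (\<Sum>x\<in>grid d Ds. \<Sum>p\<in>grid d Ds. G p * (cis (2*pi*phase d Ds x p) * cis (-2*pi*phase d Ds x q))) / of_nat (gridsize d Ds)"
      unfolding idft_def sum_divide_distrib times_divide_eq_left sum_distrib_right
      by (simp only: mult.assoc)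
    also have "\<dots> = (\<Sum>p\<in>grid d Ds. G p * (\<Sum>x\<in>grid d Ds. cis (2*pi*phase d Ds x p) * cis (-2*pi*phase d Ds x q))) / of_nat (gridsize d Ds)"
      by (subst sum.swap) (simp only: sum_distrib_left)
    finally show ?thesis .
  qed
  also have "\<dots> = (\<Sum>p\<in>grid d Ds. G p * (if p = q then of_nat (gridsize d Ds) else 0)) / of_nat (gridsize d Ds)"
    by (intro arg_cong2[where f="(/)"] sum.cong refl arg_cong2[where f="(*)"] ortho[OF Ds _ q])
  also have "\<dots> = G q" using q D by (simp add: if_distrib sum.delta cong: if_cong)
  finally show ?thesis .
qed

lemma inv2:
  assumes Ds: "\<forall>i<d. Ds i > 0" and x: "x \<in> grid d Ds"
  shows "idft d Ds (dft d Ds f) x = complex_of_real (f x)"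
proof -
  have D: "(of_nat (gridsize d Ds)::complex) \<noteq> 0" using gridsize_pos[OF Ds] by simp
  have "idft d Ds (dft d Ds f) x
     = (\<Sum>y\<in>grid d Ds. of_real (f y) * (\<Sum>p\<in>grid d Ds. cis (2*pi*phase d Ds p x) * cis (-2*pi*phase d Ds p y))) / of_nat (gridsize d Ds)"
  proof -
    have "idft d Ds (dft d Ds f) x = (\<Sum>p\<in>grid d Ds. \<Sum>y\<in>grid d Ds. of_real (f y) * (cis (2*pi*phase d Ds p x) * cis (-2*pi*phase d Ds p y))) / of_nat (gridsize d Ds)"
      unfolding idft_def dft_def sum_distrib_right
      by (intro arg_cong2[where f="(/)"] sum.cong refl) (simp add: phase_sym algebra_simps)
    also have "\<dots> = (\<Sum>y\<in>grid d Ds. of_real (f y) * (\<Sum>p\<in>grid d Ds. cis (2*pi*phase d Ds p x) * cis (-2*pi*phase d Ds p y))) / of_nat (gridsize d Ds)"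
      by (subst sum.swap) (simp only: sum_distrib_left)
    finally show ?thesis .
  qed
  also have "\<dots> = (\<Sum>y\<in>grid d Ds. of_real (f y) * (if x = y then of_nat (gridsize d Ds) else 0)) / of_nat (gridsize d Ds)"
    by (intro arg_cong2[where f="(/)"] sum.cong refl arg_cong2[where f="(*)"] ortho[OF Ds x])
  also have "\<dots> = of_real (f x)" using x D by (simp add: if_distrib sum.delta cong: if_cong)
  finally show ?thesis .
qed

lemma parseval_gen:
  assumes Ds: "\<forall>i<d. Ds i > 0"
  shows "(\<Sum>x\<in>grid d Ds. (cmod (idft d Ds G x))\<^sup>2) = (\<Sum>p\<in>grid d Ds. (cmod (G p))\<^sup>2) / real (gridsize d Ds)"
proof -
  have D: "(of_nat (gridsize d Ds)::complex) \<noteq> 0" using gridsize_pos[OF Ds] by simp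
  have cj: "cnj (idft d Ds G x) = (\<Sum>q\<in>grid d Ds. cnj (G q) * cis (-2*pi*phase d Ds x q)) / of_nat (gridsize d Ds)" for x
    by (simp add: idft_def cis_cnj)
  have "complex_of_real (\<Sum>x\<in>grid d Ds. (cmod (idft d Ds G x))\<^sup>2) = (\<Sum>x\<in>grid d Ds. idft d Ds G x * cnj (idft d Ds G x))"
    by (simp only: of_real_sum complex_norm_square)
  also have "\<dots> = (\<Sum>q\<in>grid d Ds. cnj (G q) * (\<Sum>x\<in>grid d Ds. idft d Ds G x * cis (-2*pi*phase d Ds x q))) / of_nat (gridsize d Ds)"
  proof -
    have "(\<Sum>x\<in>grid d Ds. idft d Ds G x * cnj (idft d Ds G x))
       = (\<Sum>x\<in>grid d Ds. \<Sum>q\<in>grid d Ds. cnj (G q) * (idft d Ds G x * cis (-2*pi*phase d Ds x q))) / of_nat (gridsize d Ds)"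
      unfolding cj sum_divide_distrib times_divide_eq_right sum_distrib_left
      by (intro sum.cong refl arg_cong2[where f="(/)"]) (simp only: ac_simps)
    also have "\<dots> = (\<Sum>q\<in>grid d Ds. cnj (G q) * (\<Sum>x\<in>grid d Ds. idft d Ds G x * cis (-2*pi*phase d Ds x q))) / of_nat (gridsize d Ds)"
      by (subst sum.swap) (simp only: sum_distrib_left)
    finally show ?thesis .
  qed
  also have "\<dots> = (\<Sum>q\<in>grid d Ds. cnj (G q) * G q) / of_nat (gridsize d Ds)"
    by (intro sum.cong refl arg_cong2[where f="(/)"] arg_cong2[where f="(*)"] inv1[OF Ds])
  also have "\<dots> = complex_of_real ((\<Sum>p\<in>grid d Ds. (cmod (G p))\<^sup>2) / real (gridsize d Ds))"
    by (simp only: of_real_sum of_real_divide complex_norm_square mult.commute of_real_of_nat_eq)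
  finally show ?thesis by (simp only: of_real_eq_iff)
qed

lemma parseval_real:
  assumes Ds: "\<forall>i<d. Ds i > 0"
  shows "(\<Sum>x\<in>grid d Ds. (f x)\<^sup>2) = (\<Sum>p\<in>grid d Ds. (cmod (dft d Ds f p))\<^sup>2) / real (gridsize d Ds)"
proof -
  have "(\<Sum>x\<in>grid d Ds. (f x)\<^sup>2) = (\<Sum>x\<in>grid d Ds. (cmod (idft d Ds (dft d Ds f) x))\<^sup>2)"
    by (intro sum.cong refl) (simp add: inv2[OF Ds])
  then show ?thesis by (simp add: parseval_gen[OF Ds])
qed

lemma dft_diff: "dft d Ds (\<lambda>x. f x - g x) p = dft d Ds f p - dft d Ds g p"
  by (simp add: dft_def sum_subtractf[symmetric] algebra_simps)

lemma dft_lin: "dft d Ds (\<lambda>x. \<Sum>l\<in>A. c l * f l x) p = (\<Sum>l\<in>A. complex_of_real (c l) * dft d Ds (f l) p)"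
  unfolding dft_def sum_distrib_left by (subst sum.swap) (simp add: sum_distrib_right algebra_simps)

lemma cis_cong:
  assumes "\<forall>i<d. \<exists>k::int. a' i = a i + of_int k * real (Ds i)" and that: "\<forall>i<d. Ds i > 0"
  shows "cis (2*pi*(\<Sum>i<d. a' i * real (b i) / real (Ds i))) = cis (2*pi*(\<Sum>i<d. a i * real (b i) / real (Ds i)))"
proof -
  from assms obtain k where k: "\<forall>i<d. a' i = a i + of_int (k i) * real (Ds i)"
    by metis
  have "(\<Sum>i<d. a' i * real (b i) / real (Ds i)) = (\<Sum>i<d. a i * real (b i) / real (Ds i)) + of_int (\<Sum>i<d. k i * int (b i))"
    unfolding of_int_sum sum.distrib[symmetric]
    by (intro sum.cong refl) (use k that in \<open>auto simp: field_simps\<close>)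
  moreover have int: "(\<Sum>x<d. real_of_int (k x) * real (b x)) \<in> \<int>"
    by (intro Ints_sum Ints_mult) auto
  ultimately show ?thesis
    by (simp add: distrib_left cis_mult[symmetric] cis_multiple_2pi[OF int])
qed

definition gneg :: "nat \<Rightarrow> (nat \<Rightarrow> nat) \<Rightarrow> (nat \<Rightarrow> nat) \<Rightarrow> (nat \<Rightarrow> nat)" where
  "gneg d Ds p = (\<lambda>i. if i < d then (Ds i - p i) mod Ds i else 0)"

lemma gneg_grid: "\<forall>i<d. Ds i > 0 \<Longrightarrow> p \<in> grid d Ds \<Longrightarrow> gneg d Ds p \<in> grid d Ds"
  by (auto simp: gneg_def grid_def)

lemma gneg_gneg: "\<forall>i<d. Ds i > 0 \<Longrightarrow> p \<in> grid d Ds \<Longrightarrow> gneg d Ds (gneg d Ds p) = p"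
  unfolding gneg_def grid_def fun_eq_iff
proof (intro allI, safe)
  fix i assume Ds: "\<forall>i<d. Ds i > 0" and p: "\<forall>i<d. p i < Ds i" "\<forall>i\<ge>d. p i = 0"
  show "(if i < d then (Ds i - (if i < d then (Ds i - p i) mod Ds i else 0)) mod Ds i else 0) = p i"
  proof (cases "i < d")
    case True
    then show ?thesis using Ds p
      by (cases "p i = 0") (auto simp: mod_if)
  qed (use p in auto)
qed

lemma gneg_real: "\<forall>i<d. Ds i > 0 \<Longrightarrow> p \<in> grid d Ds \<Longrightarrow> i < d \<Longrightarrow>
   \<exists>k::int. real (gneg d Ds p i) = - real (p i) + of_int k * real (Ds i)"
  by (cases "p i = 0") (auto simp: gneg_def grid_def mod_if intro: exI[of _ 0] exI[of _ 1])

lemma cis_neg: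
  assumes Ds: "\<forall>i<d. Ds i > 0" and p: "p \<in> grid d Ds"
  shows "cis (2*pi*phase d Ds x (gneg d Ds p)) = cis (-2*pi*phase d Ds x p)"
proof -
  have "cis (2*pi*phase d Ds x (gneg d Ds p)) = cis (2*pi*(\<Sum>i<d. real (gneg d Ds p i) * real (x i) / real (Ds i)))"
    by (simp add: phase_def mult.commute)
  also have "\<dots> = cis (2*pi*(\<Sum>i<d. (- real (p i)) * real (x i) / real (Ds i)))"
    by (rule cis_cong[OF _ Ds]) (use Ds p gneg_real in auto)
  also have "\<dots> = cis (-2*pi*phase d Ds x p)"
    by (simp add: phase_def sum_negf mult.commute)
  finally show ?thesis .
qed

lemma dft_herm:
  assumes Ds: "\<forall>i<d. Ds i > 0" and p: "p \<in> grid d Ds"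
  shows "dft d Ds f (gneg d Ds p) = cnj (dft d Ds f p)"
proof -
  have "cis (- 2 * pi * phase d Ds x (gneg d Ds p)) = cnj (cis (- 2 * pi * phase d Ds x p))" for x
    using arg_cong[OF cis_neg[OF Ds p, of x], of cnj] by (simp add: cis_cnj)
  then show ?thesis by (simp add: dft_def)
qed

lemma herm_sum_real:
  assumes Ds: "\<forall>i<d. Ds i > 0" and H: "\<forall>p\<in>grid d Ds. G (gneg d Ds p) = cnj (G p)"
  shows "Im (\<Sum>p\<in>grid d Ds. G p * cis (2*pi*phase d Ds x p)) = 0"
proof -
  let ?S = "\<Sum>p\<in>grid d Ds. G p * cis (2*pi*phase d Ds x p)"
  have "?S = (\<Sum>p\<in>grid d Ds. G (gneg d Ds p) * cis (2*pi*phase d Ds x (gneg d Ds p)))"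
    by (rule sum.reindex_bij_witness[of _ "gneg d Ds" "gneg d Ds"])
       (auto simp: gneg_gneg[OF Ds] gneg_grid[OF Ds])
  also have "\<dots> = cnj ?S"
    by (simp add: H cis_neg[OF Ds] cis_cnj)
  finally have "?S = cnj ?S" .
  then show ?thesis by (metis cnj.sel(2) neg_equal_zero complex.sel(2))
qed

definition gadd :: "nat \<Rightarrow> (nat \<Rightarrow> nat) \<Rightarrow> (nat \<Rightarrow> nat) \<Rightarrow> (nat \<Rightarrow> nat) \<Rightarrow> (nat \<Rightarrow> nat)" where
  "gadd d Ds z y = (\<lambda>i. if i < d then (z i + y i) mod Ds i else 0)"
definition gsub :: "nat \<Rightarrow> (nat \<Rightarrow> nat) \<Rightarrow> (nat \<Rightarrow> nat) \<Rightarrow> (nat \<Rightarrow> nat) \<Rightarrow> (nat \<Rightarrow> nat)" where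
  "gsub d Ds x y = (\<lambda>i. if i < d then nat ((int (x i) - int (y i)) mod int (Ds i)) else 0)"

lemma pext_gsub: "pext d Ds h (\<lambda>i. int (x i) - int (y i)) = h (gsub d Ds x y)"
  by (simp add: pext_def gsub_def)

lemma gadd_grid: "\<forall>i<d. Ds i > 0 \<Longrightarrow> gadd d Ds z y \<in> grid d Ds"
  by (auto simp: gadd_def grid_def)
lemma gsub_grid: "\<forall>i<d. Ds i > 0 \<Longrightarrow> gsub d Ds z y \<in> grid d Ds"
  by (auto simp: gsub_def grid_def nat_less_iff)

lemma gsub_gadd: "\<forall>i<d. Ds i > 0 \<Longrightarrow> z \<in> grid d Ds \<Longrightarrow> gsub d Ds (gadd d Ds z y) y = z"
  unfolding fun_eq_iff
proof
  fix i assume Ds: "\<forall>i<d. Ds i > 0" and z: "z \<in> grid d Ds"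
  show "gsub d Ds (gadd d Ds z y) y i = z i"
  proof (cases "i < d")
    case True
    have "(int ((z i + y i) mod Ds i) - int (y i)) mod int (Ds i) = int (z i)"
      using z True by (simp add: of_nat_mod mod_diff_left_eq grid_def)
    then show ?thesis using True by (simp add: gsub_def gadd_def)
  qed (use z in \<open>auto simp: gsub_def grid_def\<close>)
qed

lemma gadd_gsub: "\<forall>i<d. Ds i > 0 \<Longrightarrow> x \<in> grid d Ds \<Longrightarrow> gadd d Ds (gsub d Ds x y) y = x"
  unfolding fun_eq_iff
proof
  fix i assume Ds: "\<forall>i<d. Ds i > 0" and x: "x \<in> grid d Ds"
  show "gadd d Ds (gsub d Ds x y) y i = x i"
  proof (cases "i < d")
    case True
    have "int ((nat ((int (x i) - int (y i)) mod int (Ds i)) + y i) mod Ds i)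
        = ((int (x i) - int (y i)) mod int (Ds i) + int (y i)) mod int (Ds i)"
      using Ds True by (simp add: of_nat_mod)
    also have "\<dots> = int (x i)" using x True by (simp add: mod_add_left_eq grid_def)
    finally show ?thesis using True by (simp add: gsub_def gadd_def)
  qed (use x in \<open>auto simp: gadd_def grid_def\<close>)
qed

lemma cis_gadd:
  assumes Ds: "\<forall>i<d. Ds i > 0"
  shows "cis (-2*pi*phase d Ds (gadd d Ds z y) p) = cis (-2*pi*phase d Ds z p) * cis (-2*pi*phase d Ds y p)"
proof -
  have "cis (-2*pi*phase d Ds (gadd d Ds z y) p) = cis (2*pi*(\<Sum>i<d. (- real (gadd d Ds z y i)) * real (p i) / real (Ds i)))"
    by (simp add: phase_def sum_negf)
  also have "\<dots> = cis (2*pi*(\<Sum>i<d. (- (real (z i) + real (y i))) * real (p i) / real (Ds i)))"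
  proof (rule cis_cong[OF _ Ds], intro allI impI)
    fix i assume i: "i < d"
    have e: "real ((z i + y i) div Ds i) * real (Ds i) + real ((z i + y i) mod Ds i) = real (z i + y i)"
      by (metis div_mult_mod_eq of_nat_add of_nat_mult)
    have "real (gadd d Ds z y i) = real (z i) + real (y i) - real ((z i + y i) div Ds i) * real (Ds i)"
      using i e by (simp add: gadd_def)
    then show "\<exists>k::int. - real (gadd d Ds z y i) = - (real (z i) + real (y i)) + of_int k * real (Ds i)"
      by (intro exI[of _ "int ((z i + y i) div Ds i)"]) simp
  qed
  also have "\<dots> = cis (-2*pi*phase d Ds z p) * cis (-2*pi*phase d Ds y p)"
  proof -
    have E: "(\<Sum>i<d. (- (real (z i) + real (y i))) * real (p i) / real (Ds i)) = - phase d Ds z p - phase d Ds y p"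
      unfolding phase_def sum_negf[symmetric] sum_subtractf[symmetric]
      by (intro sum.cong refl) (use Ds in \<open>auto simp: field_simps\<close>)
    show ?thesis unfolding E cis_mult by (rule arg_cong[where f=cis]) (simp add: algebra_simps)
  qed
  finally show ?thesis .
qed

lemma dft_conv:
  assumes Ds: "\<forall>i<d. Ds i > 0"
  shows "dft d Ds (circ_conv d Ds h f) p = dft d Ds h p * dft d Ds f p"
proof -
  have inner: "(\<Sum>x\<in>grid d Ds. complex_of_real (h (gsub d Ds x y)) * cis (-2*pi*phase d Ds x p))
      = dft d Ds h p * cis (-2*pi*phase d Ds y p)" if y: "y \<in> grid d Ds" for y
  proof -
    have "(\<Sum>x\<in>grid d Ds. complex_of_real (h (gsub d Ds x y)) * cis (-2*pi*phase d Ds x p))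
       = (\<Sum>z\<in>grid d Ds. complex_of_real (h z) * cis (-2*pi*phase d Ds (gadd d Ds z y) p))"
      by (rule sum.reindex_bij_witness[of _ "\<lambda>z. gadd d Ds z y" "\<lambda>x. gsub d Ds x y"])
         (auto simp: gsub_gadd[OF Ds] gadd_gsub[OF Ds] gadd_grid[OF Ds] gsub_grid[OF Ds])
    also have "\<dots> = dft d Ds h p * cis (-2*pi*phase d Ds y p)"
      unfolding cis_gadd[OF Ds] dft_def sum_distrib_right by (simp only: mult.assoc)
    finally show ?thesis .
  qed
  have "dft d Ds (circ_conv d Ds h f) p
     = (\<Sum>y\<in>grid d Ds. complex_of_real (f y) * (\<Sum>x\<in>grid d Ds. complex_of_real (h (gsub d Ds x y)) * cis (-2*pi*phase d Ds x p)))"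
    unfolding dft_def circ_conv_def pext_gsub of_real_sum sum_distrib_right sum_distrib_left
    by (subst sum.swap) (simp add: algebra_simps)
  also have "\<dots> = (\<Sum>y\<in>grid d Ds. complex_of_real (f y) * (dft d Ds h p * cis (-2*pi*phase d Ds y p)))"
    by (intro sum.cong refl arg_cong2[where f="(*)"] inner)
  also have "\<dots> = (\<Sum>y\<in>grid d Ds. complex_of_real (f y) * cis (-2*pi*phase d Ds y p)) * dft d Ds h p"
    unfolding sum_distrib_right by (intro sum.cong refl) (simp only: ac_simps)
  also have "\<dots> = dft d Ds h p * dft d Ds f p"
    by (simp add: dft_def mult.commute)
  finally show ?thesis .
qed

lemma borel_measurable_from_ac:
  fixes f :: "real \<Rightarrow> real"
  assumes "\<forall>a b. a \<le> b \<longrightarrow> set_integrable lborel {a..b} f"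
  shows "f \<in> borel_measurable borel"
proof -
  have m: "(\<lambda>x. indicator {- real n..real n} x * f x) \<in> borel_measurable borel" for n
  proof -
    have "set_integrable lborel {-real n..real n} f" using assms by simp
    then have "(\<lambda>x. indicator {- real n..real n} x *\<^sub>R f x) \<in> borel_measurable lborel"
      unfolding set_integrable_def by (rule borel_measurable_integrable)
    then show ?thesis by simp
  qed
  show ?thesis
  proof (rule borel_measurable_LIMSEQ_real[OF _ m])
    fix x :: real
    have "eventually (\<lambda>n. indicator {- real n..real n} x * f x = f x) sequentially"
      using eventually_ge_at_top[of "nat \<lceil>\<bar>x\<bar>\<rceil>"]
      by eventually_elim (auto simp: indicator_def abs_le_iff dest: le_nat_iff[THEN iffD1] intro!: order.trans[OF real_nat_ceiling_ge])
    then show "(\<lambda>n. indicator {- real n..real n} x * f x) \<longlonglongrightarrow> f x"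
      by (rule tendsto_eventually)
  qed
qed

lemma nd_eq: "\<gamma> > 0 \<Longrightarrow> normal_density 0 (sqrt \<gamma>) u = exp (- u\<^sup>2 / (2*\<gamma>)) / sqrt (2*pi*\<gamma>)"
  by (simp add: normal_density_def)

lemma nd_deriv:
  assumes "\<gamma> > 0"
  shows "((\<lambda>u. - \<gamma> * normal_density 0 (sqrt \<gamma>) u) has_real_derivative (u * normal_density 0 (sqrt \<gamma>) u)) (at u)"
proof -
  define C where "C = 1 / sqrt (2*pi*\<gamma>)"
  have "((\<lambda>u. - \<gamma> * (exp (- u\<^sup>2 / (2*\<gamma>)) * C)) has_real_derivative (u * (exp (- u\<^sup>2 / (2*\<gamma>)) * C))) (at u)"
    using assms by (auto intro!: derivative_eq_intros simp: field_simps)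
  moreover have "normal_density 0 (sqrt \<gamma>) = (\<lambda>u. exp (- u\<^sup>2 / (2*\<gamma>)) * C)"
    using assms by (auto simp: C_def nd_eq fun_eq_iff)
  ultimately show ?thesis by simp
qed

lemma nd_lim:
  assumes "\<gamma> > 0"
  shows "((\<lambda>u. - \<gamma> * normal_density 0 (sqrt \<gamma>) u) \<longlongrightarrow> 0) at_top"
proof -
  have "((\<lambda>u. - \<gamma> * (exp (- u\<^sup>2 / (2*\<gamma>)) / sqrt (2*pi*\<gamma>))) \<longlongrightarrow> 0) at_top"
    using assms by real_asymp
  then show ?thesis using nd_eq[OF assms] by simp
qed

lemma nd_even: "normal_density 0 s (- u) = normal_density 0 s u"
  by (simp add: normal_density_def)

lemma tail_pos:
  assumes g: "\<gamma> > 0" and v: "0 \<le> v"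
  shows "(\<integral>\<^sup>+u. ennreal (u * normal_density 0 (sqrt \<gamma>) u) * indicator {v..} u \<partial>lborel)
         = ennreal (\<gamma> * normal_density 0 (sqrt \<gamma>) v)"
proof -
  have "(\<integral>\<^sup>+u. ennreal (u * normal_density 0 (sqrt \<gamma>) u) * indicator {v..} u \<partial>lborel)
        = 0 - (- \<gamma> * normal_density 0 (sqrt \<gamma>) v)"
    by (rule nn_integral_FTC_atLeast[OF _ nd_deriv[OF g] _ nd_lim[OF g]]) (use v in auto)
  then show ?thesis by simp
qed

lemma tail_neg:
  assumes g: "\<gamma> > 0" and v: "v \<le> 0"
  shows "(\<integral>\<^sup>+u. ennreal (- u * normal_density 0 (sqrt \<gamma>) u) * indicator {..v} u \<partial>lborel)
         = ennreal (\<gamma> * normal_density 0 (sqrt \<gamma>) v)"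
proof -
  have "(\<integral>\<^sup>+u. ennreal (- u * normal_density 0 (sqrt \<gamma>) u) * indicator {..v} u \<partial>lborel)
     = ennreal \<bar>-1\<bar> * (\<integral>\<^sup>+x. ennreal (- (0 + -1 * x) * normal_density 0 (sqrt \<gamma>) (0 + -1 * x)) * indicator {..v} (0 + -1 * x) \<partial>lborel)"
    by (rule nn_integral_real_affine) auto
  also have "\<dots> = (\<integral>\<^sup>+x. ennreal (x * normal_density 0 (sqrt \<gamma>) x) * indicator {-v..} x \<partial>lborel)"
    by (auto simp: nd_even indicator_def intro!: nn_integral_cong)
  also have "\<dots> = ennreal (\<gamma> * normal_density 0 (sqrt \<gamma>) v)"
    using tail_pos[OF g, of "-v"] v by (simp add: nd_even)
  finally show ?thesis .
qed

definition Kk :: "real \<Rightarrow> real \<Rightarrow> real" where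
  "Kk u v = (if 0 \<le> v \<and> v \<le> u then 1 else if u \<le> v \<and> v \<le> 0 \<and> u < 0 then -1 else 0)"

lemma Kk_u_eq:
  fixes T' :: "real \<Rightarrow> real"
  assumes g: "\<gamma> > 0" and v: "v \<noteq> 0"
  shows "has_bochner_integral lborel (\<lambda>u. u * normal_density 0 (sqrt \<gamma>) u * Kk u v) (\<gamma> * normal_density 0 (sqrt \<gamma>) v)"
    and "(\<integral>\<^sup>+u. ennreal \<bar>u * normal_density 0 (sqrt \<gamma>) u * Kk u v\<bar> \<partial>lborel) = ennreal (\<gamma> * normal_density 0 (sqrt \<gamma>) v)"
proof -
  let ?nd = "normal_density 0 (sqrt \<gamma>)"
  define h where "h = (if 0 < v then (\<lambda>u. u * ?nd u * indicator {v..} u) else (\<lambda>u. - u * ?nd u * indicator {..v} u))"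
  have h_eq: "u * ?nd u * Kk u v = h u" for u
    using v by (auto simp: h_def Kk_def indicator_def)
  have h_nn: "0 \<le> h u" for u
    using v by (auto simp: h_def indicator_def mult_nonpos_nonneg)
  have h_int: "(\<integral>\<^sup>+u. ennreal (h u) \<partial>lborel) = ennreal (\<gamma> * ?nd v)"
  proof (cases "0 < v")
    case True
    then have "(\<integral>\<^sup>+u. ennreal (h u) \<partial>lborel) = (\<integral>\<^sup>+u. ennreal (u * ?nd u) * indicator {v..} u \<partial>lborel)"
      by (auto simp: h_def indicator_def intro!: nn_integral_cong)
    then show ?thesis using tail_pos[OF g, of v] True by simp
  next
    case False
    then have "(\<integral>\<^sup>+u. ennreal (h u) \<partial>lborel) = (\<integral>\<^sup>+u. ennreal (- u * ?nd u) * indicator {..v} u \<partial>lborel)"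
      by (auto simp: h_def indicator_def intro!: nn_integral_cong)
    then show ?thesis using tail_neg[OF g, of v] False by simp
  qed
  have hm: "h \<in> borel_measurable borel" unfolding h_def by (cases "0 < v") (simp_all only: if_True if_False; measurable)+
  show "has_bochner_integral lborel (\<lambda>u. u * ?nd u * Kk u v) (\<gamma> * ?nd v)"
    unfolding h_eq by (rule has_bochner_integral_nn_integral) (use hm h_nn h_int g in auto)
  show "(\<integral>\<^sup>+u. ennreal \<bar>u * ?nd u * Kk u v\<bar> \<partial>lborel) = ennreal (\<gamma> * ?nd v)"
    unfolding h_eq using h_nn h_int by simp
qed

lemma seg_integral:
  fixes T T' :: "real \<Rightarrow> real"
  assumes ac: "\<forall>a b. a \<le> b \<longrightarrow> set_integrable lborel {a..b} T' \<and> T b - T a = (\<integral>x\<in>{a..b}. T' x \<partial>lborel)"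
    and lh: "aa \<le> bb"
  shows "(\<integral>w. indicator {aa..bb} w * (c * T' (b + c* w)) \<partial>lborel) = T (b + c*bb) - T (b + c*aa)"
proof (cases "c = 0")
  case True then show ?thesis by simp
next
  case False
  define aa' bb' where "aa' = min (b + c*aa) (b + c*bb)" and "bb' = max (b + c*aa) (b + c*bb)"
  define F where "F w = indicator {aa'..bb'} w * T' w" for w
  have Fb: "F (b + c* v) = indicator {aa..bb} v * T' (b + c* v)" for v
  proof -
    have "(b + c* v \<in> {aa'..bb'}) = (v \<in> {aa..bb})"
      using False lh by (cases "c > 0") (auto simp: aa'_def bb'_def mult_le_cancel_left min_def max_def)
    then show ?thesis by (simp add: F_def indicator_def)
  qed
  have "(\<integral>w. F w \<partial>lborel) = \<bar>c\<bar> *\<^sub>R (\<integral>w. F (b + c* w) \<partial>lborel)"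
    by (rule lborel_integral_real_affine[OF False])
  then have I: "(\<integral>w. indicator {aa..bb} w * T' (b + c* w) \<partial>lborel) = (\<integral>w. F w \<partial>lborel) / \<bar>c\<bar>"
    using False by (simp add: Fb)
  have "(\<integral>w. F w \<partial>lborel) = (\<integral>x\<in>{aa'..bb'}. T' x \<partial>lborel)"
    by (simp add: F_def set_lebesgue_integral_def)
  also have "\<dots> = T bb' - T aa'" using ac by (simp add: aa'_def bb'_def)
  finally have I2: "(\<integral>w. F w \<partial>lborel) = T bb' - T aa'" .
  have "(\<integral>w. indicator {aa..bb} w * (c * T' (b + c* w)) \<partial>lborel) = c * (\<integral>w. indicator {aa..bb} w * T' (b + c* w) \<partial>lborel)"
    by (simp add: ac_simps)
  also have "\<dots> = T (b + c*bb) - T (b + c*aa)"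
    unfolding I I2 using False lh
    by (cases "c > 0") (auto simp: aa'_def bb'_def min_def max_def mult_le_cancel_left field_simps)
  finally show ?thesis .
qed

lemma Kk_v_eq:
  fixes T T' :: "real \<Rightarrow> real"
  assumes ac: "\<forall>a b. a \<le> b \<longrightarrow> set_integrable lborel {a..b} T' \<and> T b - T a = (\<integral>x\<in>{a..b}. T' x \<partial>lborel)"
  shows "(\<integral>w. Kk u w * (c * T' (b + c* w)) \<partial>lborel) = T (b + c*u) - T b"
proof (cases "0 \<le> u")
  case True
  then have "(\<lambda>v. Kk u v * (c * T' (b + c* v))) = (\<lambda>v. indicator {0..u} v * (c * T' (b + c* v)))"
    by (auto simp: Kk_def indicator_def fun_eq_iff)
  then show ?thesis using seg_integral[OF ac True, of c b] by simp
next
  case False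
  then have "(\<lambda>v. Kk u v * (c * T' (b + c* v))) = (\<lambda>v. - (indicator {u..0} v * (c * T' (b + c* v))))"
    by (auto simp: Kk_def indicator_def fun_eq_iff)
  then show ?thesis using seg_integral[OF ac, of u 0 c b] False by simp
qed

lemma stein:
  fixes T T' :: "real \<Rightarrow> real" and \<gamma> b c :: real
  assumes g: "\<gamma> > 0"
    and ac: "\<forall>a b. a \<le> b \<longrightarrow> set_integrable lborel {a..b} T' \<and> T b - T a = (\<integral>x\<in>{a..b}. T' x \<partial>lborel)"
    and int: "integrable lborel (\<lambda>w. normal_density 0 (sqrt \<gamma>) w * T' (b + c * w))"
  shows "integrable lborel (\<lambda>u. normal_density 0 (sqrt \<gamma>) u * (u * T (b + c * u)))"
    and "(\<integral>u. normal_density 0 (sqrt \<gamma>) u * (u * T (b + c * u)) \<partial>lborel)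
         = \<gamma> * c * (\<integral>w. normal_density 0 (sqrt \<gamma>) w * T' (b + c * w) \<partial>lborel)"
proof -
  let ?nd = "normal_density 0 (sqrt \<gamma>)"
  have T'm[measurable]: "T' \<in> borel_measurable borel"
    using ac by (intro borel_measurable_from_ac) auto
  define kk where "kk u w = u * ?nd u * (Kk u w * (c * T' (b + c * w)))" for u w
  have kkm[measurable]: "(\<lambda>(u, w). kk u w) \<in> borel_measurable (lborel \<Otimes>\<^sub>M lborel)"
    unfolding kk_def Kk_def by measurable
  have nn_in: "(\<integral>\<^sup>+u. ennreal \<bar>kk u w\<bar> \<partial>lborel) = ennreal (\<gamma> * ?nd w * \<bar>c * T' (b + c * w)\<bar>)"
    if w: "w \<noteq> 0" for w
  proof -
    have "(\<integral>\<^sup>+u. ennreal \<bar>kk u w\<bar> \<partial>lborel)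
        = (\<integral>\<^sup>+u. ennreal \<bar>u * ?nd u * Kk u w\<bar> * ennreal \<bar>c * T' (b + c * w)\<bar> \<partial>lborel)"
      by (intro nn_integral_cong) (simp add: kk_def abs_mult ennreal_mult mult.assoc)
    also have "\<dots> = (\<integral>\<^sup>+u. ennreal \<bar>u * ?nd u * Kk u w\<bar> \<partial>lborel) * ennreal \<bar>c * T' (b + c * w)\<bar>"
      by (rule nn_integral_multc) (unfold Kk_def, measurable)
    also have "\<dots> = ennreal (\<gamma> * ?nd w * \<bar>c * T' (b + c * w)\<bar>)"
      using Kk_u_eq(2)[OF g w] g by (simp add: ennreal_mult)
    finally show ?thesis .
  qed
  have int2: "integrable lborel (\<lambda>w. \<gamma> * \<bar>c\<bar> * \<bar>?nd w * T' (b + c * w)\<bar>)"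
    using int by (intro integrable_mult_right integrable_abs)
  have "(\<integral>\<^sup>+x. ennreal (norm ((\<lambda>(u, w). kk u w) x)) \<partial>(lborel \<Otimes>\<^sub>M lborel))
      = (\<integral>\<^sup>+w. (\<integral>\<^sup>+u. ennreal (norm (kk u w)) \<partial>lborel) \<partial>lborel)"
    by (subst lborel_pair.nn_integral_snd[symmetric]) (auto simp: case_prod_beta)
  also have "\<dots> = (\<integral>\<^sup>+w. ennreal (\<gamma> * \<bar>c\<bar> * \<bar>?nd w * T' (b + c * w)\<bar>) \<partial>lborel)"
    by (rule nn_integral_cong_AE, rule AE_mp[OF AE_lborel_singleton[of 0]], rule AE_I2)
       (simp add: nn_in abs_mult ac_simps)
  also have "\<dots> < \<infinity>"
    using integrableD(2)[OF int2] by (simp add: top.not_eq_extremum)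
  finally have kki: "integrable (lborel \<Otimes>\<^sub>M lborel) (\<lambda>(u, w). kk u w)"
    by (intro integrableI_bounded kkm)
  have fst: "(\<integral>w. kk u w \<partial>lborel) = u * ?nd u * (T (b + c * u) - T b)" for u
    unfolding kk_def by (simp add: Kk_v_eq[OF ac])
  have snd: "AE w in lborel. (\<integral>u. kk u w \<partial>lborel) = \<gamma> * c * (?nd w * T' (b + c * w))"
  proof (rule AE_mp[OF AE_lborel_singleton[of 0]], intro AE_I2 impI)
    fix w :: real assume w: "w \<noteq> 0"
    have "(\<integral>u. kk u w \<partial>lborel) = (\<integral>u. u * ?nd u * Kk u w \<partial>lborel) * (c * T' (b + c * w))"
      unfolding kk_def integral_mult_left_zero[symmetric] by (simp add: mult.assoc)
    also have "\<dots> = \<gamma> * c * (?nd w * T' (b + c * w))"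
      using has_bochner_integral_integral_eq[OF Kk_u_eq(1)[OF g w]] by simp
    finally show "(\<integral>u. kk u w \<partial>lborel) = \<gamma> * c * (?nd w * T' (b + c * w))" .
  qed
  have I1: "integrable lborel (\<lambda>u. u * ?nd u * (T (b + c * u) - T b))"
    using lborel_pair.integrable_fst[OF kki] unfolding fst .
  have E1: "(\<integral>u. u * ?nd u * (T (b + c * u) - T b) \<partial>lborel) = \<gamma> * c * (\<integral>w. ?nd w * T' (b + c * w) \<partial>lborel)"
  proof -
    have "(\<integral>u. u * ?nd u * (T (b + c * u) - T b) \<partial>lborel) = (\<integral>u. (\<integral>w. kk u w \<partial>lborel) \<partial>lborel)"
      by (simp add: fst)
    also have "\<dots> = (\<integral>w. (\<integral>u. kk u w \<partial>lborel) \<partial>lborel)"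
      by (rule lborel_pair.Fubini_integral[symmetric]) (use kki in simp)
    also have "\<dots> = (\<integral>w. \<gamma> * c * (?nd w * T' (b + c * w)) \<partial>lborel)"
      by (rule integral_cong_AE) (use snd in auto)
    also have "\<dots> = \<gamma> * c * (\<integral>w. ?nd w * T' (b + c * w) \<partial>lborel)" by simp
    finally show ?thesis .
  qed
  have m1: "integrable lborel (\<lambda>u. ?nd u * u)"
    using g by (intro integrable_normal_moment_nz_1) simp
  have m1e: "(\<integral>u. ?nd u * u \<partial>lborel) = 0"
    using g integral_normal_moment_nz_1[of "sqrt \<gamma>" 0] by simp
  have eq: "(\<lambda>u. ?nd u * (u * T (b + c * u))) = (\<lambda>u. u * ?nd u * (T (b + c * u) - T b) + T b * (?nd u * u))"
    by (auto simp: fun_eq_iff algebra_simps)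
  show "integrable lborel (\<lambda>u. ?nd u * (u * T (b + c * u)))"
    unfolding eq using I1 m1 by (intro Bochner_Integration.integrable_add integrable_mult_right)
  show "(\<integral>u. ?nd u * (u * T (b + c * u)) \<partial>lborel) = \<gamma> * c * (\<integral>w. ?nd w * T' (b + c * w) \<partial>lborel)"
    unfolding eq using I1 m1 E1 m1e by (subst Bochner_Integration.integral_add) auto
qed

lemma (in product_sigma_finite) AE_integrable_insert:
  fixes f :: "_ \<Rightarrow> real"
  assumes I: "finite I" "i \<notin> I" and f: "integrable (Pi\<^sub>M (insert i I) M) f"
  shows "AE x in Pi\<^sub>M I M. integrable (M i) (\<lambda>y. f (x(i:=y)))"
proof -
  interpret I: finite_product_sigma_finite M I by standard fact
  interpret J: finite_product_sigma_finite M "{i}" by standard simp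
  interpret P: pair_sigma_finite "Pi\<^sub>M I M" "Pi\<^sub>M {i} M" ..
  have IJ: "I \<inter> {i} = {}" using I by auto
  have f_borel: "f \<in> borel_measurable (Pi\<^sub>M (insert i I) M)" using f by auto
  have f_int: "integrable (Pi\<^sub>M I M \<Otimes>\<^sub>M Pi\<^sub>M {i} M) (\<lambda>x. f (merge I {i} x))"
  proof (rule integrable_distr[OF measurable_merge])
    have "distr (Pi\<^sub>M I M \<Otimes>\<^sub>M Pi\<^sub>M {i} M) (Pi\<^sub>M (I \<union> {i}) M) (merge I {i}) = Pi\<^sub>M (I \<union> {i}) M"
      using IJ I by (intro distr_merge) auto
    then show "integrable (distr (Pi\<^sub>M I M \<Otimes>\<^sub>M Pi\<^sub>M {i} M) (Pi\<^sub>M (I \<union> {i}) M) (merge I {i})) f"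
      using f by simp
  qed
  have "AE x in Pi\<^sub>M I M. integrable (Pi\<^sub>M {i} M) (\<lambda>y. f (merge I {i} (x, y)))"
    using P.AE_integrable_fst'[OF f_int] by simp
  with AE_space show ?thesis
  proof eventually_elim
    fix x assume x: "x \<in> space (Pi\<^sub>M I M)" and int: "integrable (Pi\<^sub>M {i} M) (\<lambda>y. f (merge I {i} (x, y)))"
    have m: "(\<lambda>y. f (x(i := y))) \<in> borel_measurable (M i)"
      using measurable_comp[OF measurable_component_update f_borel, OF x \<open>i \<notin> I\<close>]
      unfolding comp_def .
    have "integrable (Pi\<^sub>M {i} M) (\<lambda>y. f (x(i := y i))) \<longleftrightarrow> integrable (Pi\<^sub>M {i} M) (\<lambda>y. f (merge I {i} (x, y)))"
      using x I by (intro Bochner_Integration.integrable_cong refl) (auto intro!: arg_cong[where f=f] simp: merge_def space_PiM extensional_def PiE_def fun_eq_iff)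
    with int have "integrable (Pi\<^sub>M {i} M) (\<lambda>y. f (x(i := y i)))" by simp
    then have "integrable (distr (Pi\<^sub>M {i} M) (M i) (\<lambda>x. x i)) (\<lambda>y. f (x(i:=y)))"
      by (subst integrable_distr_eq) (auto simp: m)
    then show "integrable (M i) (\<lambda>y. f (x(i:=y)))" by (simp add: distr_singleton)
  qed
qed

lemma stein_gauss:
  fixes T T' :: "real \<Rightarrow> real" and \<gamma> b c :: real
  assumes g: "\<gamma> > 0"
    and ac: "\<forall>a b. a \<le> b \<longrightarrow> set_integrable lborel {a..b} T' \<and> T b - T a = (\<integral>x\<in>{a..b}. T' x \<partial>lborel)"
    and int: "integrable (density lborel (normal_density 0 (sqrt \<gamma>))) (\<lambda>w. T' (b + c * w))"
  shows "integrable (density lborel (normal_density 0 (sqrt \<gamma>))) (\<lambda>u. T (b + c * u) * u)"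
    and "(\<integral>u. T (b + c * u) * u \<partial>density lborel (normal_density 0 (sqrt \<gamma>)))
         = \<gamma> * c * (\<integral>w. T' (b + c * w) \<partial>density lborel (normal_density 0 (sqrt \<gamma>)))"
proof -
  have T'm[measurable]: "T' \<in> borel_measurable borel"
    using ac by (intro borel_measurable_from_ac) auto
  have i1: "integrable lborel (\<lambda>w. normal_density 0 (sqrt \<gamma>) w * T' (b + c * w))"
    using int by (subst (asm) integrable_density) auto
  note S = stein[OF g ac i1]
  have Tm: "(\<lambda>u. T (b + c * u) * u) \<in> borel_measurable lborel"
  proof -
    have "integrable lborel (\<lambda>u. normal_density 0 (sqrt \<gamma>) u * (u * T (b + c * u)))" by (rule S(1))
    then have "(\<lambda>u. normal_density 0 (sqrt \<gamma>) u * (u * T (b + c * u))) \<in> borel_measurable lborel" by auto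
    then have "(\<lambda>u. inverse (normal_density 0 (sqrt \<gamma>) u) * (normal_density 0 (sqrt \<gamma>) u * (u * T (b + c * u)))) \<in> borel_measurable lborel"
      by measurable
    moreover have "inverse (normal_density 0 (sqrt \<gamma>) u) * (normal_density 0 (sqrt \<gamma>) u * (u * T (b + c * u))) = T (b + c * u) * u" for u
      using normal_density_pos[of "sqrt \<gamma>" 0 u] g by (simp add: field_simps)
    ultimately show ?thesis by simp
  qed
  show "integrable (density lborel (normal_density 0 (sqrt \<gamma>))) (\<lambda>u. T (b + c * u) * u)"
    using S(1) Tm by (subst integrable_density) (auto simp: ac_simps)
  show "(\<integral>u. T (b + c * u) * u \<partial>density lborel (normal_density 0 (sqrt \<gamma>)))
         = \<gamma> * c * (\<integral>w. T' (b + c * w) \<partial>density lborel (normal_density 0 (sqrt \<gamma>)))"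
    using S(2) Tm by (subst integral_density, simp_all, subst integral_density) (auto simp: ac_simps)
qed

definition l2 :: "'a measure \<Rightarrow> ('a \<Rightarrow> complex) \<Rightarrow> bool" where
  "l2 M Z \<longleftrightarrow> Z \<in> borel_measurable M \<and> integrable M (\<lambda>\<omega>. (cmod (Z \<omega>))\<^sup>2)"

lemma cnj_meas[measurable]: "cnj \<in> borel_measurable borel"
  by (intro borel_measurable_continuous_onI continuous_intros)

lemma l2_meas: "l2 M Z \<Longrightarrow> Z \<in> borel_measurable M" by (simp add: l2_def)
lemma l2_int: "l2 M Z \<Longrightarrow> integrable M (\<lambda>\<omega>. (cmod (Z \<omega>))\<^sup>2)" by (simp add: l2_def)

lemma sq_add_le: "(cmod (a + b))\<^sup>2 \<le> 2 * (cmod a)\<^sup>2 + 2 * (cmod b)\<^sup>2"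
proof -
  have "(cmod (a + b))\<^sup>2 \<le> (cmod a + cmod b)\<^sup>2"
    by (intro power_mono norm_triangle_ineq) simp
  also have "\<dots> \<le> 2 * (cmod a)\<^sup>2 + 2 * (cmod b)\<^sup>2"
  proof -
    have "0 \<le> (cmod a - cmod b)\<^sup>2" by simp
    then show ?thesis unfolding power2_sum power2_diff by linarith
  qed
  finally show ?thesis .
qed

lemma l2_add: "l2 M Z \<Longrightarrow> l2 M W \<Longrightarrow> l2 M (\<lambda>\<omega>. Z \<omega> + W \<omega>)"
  unfolding l2_def
proof (elim conjE, intro conjI)
  assume [measurable]: "Z \<in> borel_measurable M" "W \<in> borel_measurable M"
    and i: "integrable M (\<lambda>\<omega>. (cmod (Z \<omega>))\<^sup>2)" "integrable M (\<lambda>\<omega>. (cmod (W \<omega>))\<^sup>2)"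
  show "(\<lambda>\<omega>. Z \<omega> + W \<omega>) \<in> borel_measurable M" by measurable
  show "integrable M (\<lambda>\<omega>. (cmod (Z \<omega> + W \<omega>))\<^sup>2)"
  proof (rule Bochner_Integration.integrable_bound[of _ "\<lambda>\<omega>. 2 * (cmod (Z \<omega>))\<^sup>2 + 2 * (cmod (W \<omega>))\<^sup>2"])
    show "integrable M (\<lambda>\<omega>. 2 * (cmod (Z \<omega>))\<^sup>2 + 2 * (cmod (W \<omega>))\<^sup>2)"
      using i by (intro Bochner_Integration.integrable_add integrable_mult_right)
    show "(\<lambda>\<omega>. (cmod (Z \<omega> + W \<omega>))\<^sup>2) \<in> borel_measurable M" by measurable
    show "AE \<omega> in M. norm ((cmod (Z \<omega> + W \<omega>))\<^sup>2) \<le> norm (2 * (cmod (Z \<omega>))\<^sup>2 + 2 * (cmod (W \<omega>))\<^sup>2)"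
    proof (rule AE_I2)
      fix \<omega> show "norm ((cmod (Z \<omega> + W \<omega>))\<^sup>2) \<le> norm (2 * (cmod (Z \<omega>))\<^sup>2 + 2 * (cmod (W \<omega>))\<^sup>2)"
        using sq_add_le[of "Z \<omega>" "W \<omega>"] by simp
    qed
  qed
qed

lemma l2_scale: "l2 M Z \<Longrightarrow> l2 M (\<lambda>\<omega>. c * Z \<omega>)"
  unfolding l2_def
proof (elim conjE, intro conjI)
  assume [measurable]: "Z \<in> borel_measurable M" and i: "integrable M (\<lambda>\<omega>. (cmod (Z \<omega>))\<^sup>2)"
  show "(\<lambda>\<omega>. c * Z \<omega>) \<in> borel_measurable M" by measurable
  have "integrable M (\<lambda>\<omega>. (cmod c)\<^sup>2 * (cmod (Z \<omega>))\<^sup>2)" using i by (rule integrable_mult_right)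
  moreover have "(cmod c)\<^sup>2 * (cmod (Z \<omega>))\<^sup>2 = (cmod (c * Z \<omega>))\<^sup>2" for \<omega>
    by (simp only: norm_mult power_mult_distrib)
  ultimately show "integrable M (\<lambda>\<omega>. (cmod (c * Z \<omega>))\<^sup>2)" by simp
qed

lemma l2_neg: "l2 M Z \<Longrightarrow> l2 M (\<lambda>\<omega>. - Z \<omega>)"
  using l2_scale[of M Z "-1"] by simp

lemma l2_diff: "l2 M Z \<Longrightarrow> l2 M W \<Longrightarrow> l2 M (\<lambda>\<omega>. Z \<omega> - W \<omega>)"
  using l2_add[OF _ l2_neg, of M Z W] by simp

lemma l2_div: "l2 M Z \<Longrightarrow> l2 M (\<lambda>\<omega>. Z \<omega> / c)"
proof -
  assume "l2 M Z"
  from l2_scale[OF this, of "inverse c"] have "l2 M (\<lambda>\<omega>. inverse c * Z \<omega>)" .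
  moreover have "(\<lambda>\<omega>. inverse c * Z \<omega>) = (\<lambda>\<omega>. Z \<omega> / c)" by (simp add: divide_inverse_commute)
  ultimately show ?thesis by simp
qed

lemma l2_zero: "l2 M (\<lambda>\<omega>. 0)" by (simp add: l2_def)

lemma l2_sum: "finite A \<Longrightarrow> (\<And>i. i \<in> A \<Longrightarrow> l2 M (Z i)) \<Longrightarrow> l2 M (\<lambda>\<omega>. \<Sum>i\<in>A. Z i \<omega>)"
  by (induction A rule: finite_induct) (auto intro: l2_add l2_zero)

lemma l2_of_real: "X \<in> borel_measurable M \<Longrightarrow> integrable M (\<lambda>\<omega>. (X \<omega>)\<^sup>2) \<Longrightarrow> l2 M (\<lambda>\<omega>. complex_of_real (X \<omega>))"
  unfolding l2_def by auto

lemma int_Re_cnj: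
  assumes "l2 M Z" "l2 M W"
  shows "integrable M (\<lambda>\<omega>. Re (Z \<omega> * cnj (W \<omega>)))"
proof -
  have [measurable]: "Z \<in> borel_measurable M" "W \<in> borel_measurable M" using assms by (auto simp: l2_def)
  have bd: "\<bar>Re (a * cnj b)\<bar> \<le> (cmod a)\<^sup>2 + (cmod b)\<^sup>2" for a b :: complex
  proof -
    have "\<bar>Re (a * cnj b)\<bar> \<le> cmod (a * cnj b)" by (rule abs_Re_le_cmod)
    also have "\<dots> = cmod a * cmod b" by (simp add: norm_mult)
    also have "\<dots> \<le> (cmod a)\<^sup>2 + (cmod b)\<^sup>2"
    proof -
      have "0 \<le> (cmod a - cmod b)\<^sup>2" by simp
      moreover have "0 \<le> cmod a * cmod b" by simp
      ultimately show ?thesis unfolding power2_diff by linarith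
    qed
    finally show ?thesis .
  qed
  show ?thesis
  proof (rule Bochner_Integration.integrable_bound[of _ "\<lambda>\<omega>. (cmod (Z \<omega>))\<^sup>2 + (cmod (W \<omega>))\<^sup>2"])
    show "integrable M (\<lambda>\<omega>. (cmod (Z \<omega>))\<^sup>2 + (cmod (W \<omega>))\<^sup>2)"
      using assms unfolding l2_def by (intro Bochner_Integration.integrable_add) auto
    show "(\<lambda>\<omega>. Re (Z \<omega> * cnj (W \<omega>))) \<in> borel_measurable M" by measurable
    show "AE \<omega> in M. norm (Re (Z \<omega> * cnj (W \<omega>))) \<le> norm ((cmod (Z \<omega>))\<^sup>2 + (cmod (W \<omega>))\<^sup>2)"
    proof (rule AE_I2)
      fix \<omega> show "norm (Re (Z \<omega> * cnj (W \<omega>))) \<le> norm ((cmod (Z \<omega>))\<^sup>2 + (cmod (W \<omega>))\<^sup>2)"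
        using bd[of "Z \<omega>" "W \<omega>"] by simp
    qed
  qed
qed

lemma int_mult_l2:
  fixes X Y :: "'a \<Rightarrow> real"
  assumes "X \<in> borel_measurable M" "integrable M (\<lambda>\<omega>. (X \<omega>)\<^sup>2)" "Y \<in> borel_measurable M" "integrable M (\<lambda>\<omega>. (Y \<omega>)\<^sup>2)"
  shows "integrable M (\<lambda>\<omega>. X \<omega> * Y \<omega>)"
  using int_Re_cnj[OF l2_of_real[OF assms(1,2)] l2_of_real[OF assms(3,4)]] by simp

lemma (in prob_space) l2_integrable:
  fixes X :: "'a \<Rightarrow> real"
  assumes "X \<in> borel_measurable M" "integrable M (\<lambda>\<omega>. (X \<omega>)\<^sup>2)"
  shows "integrable M X"
proof (rule Bochner_Integration.integrable_bound[of _ "\<lambda>\<omega>. 1 + (X \<omega>)\<^sup>2"])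
  show "integrable M (\<lambda>\<omega>. 1 + (X \<omega>)\<^sup>2)" using assms by (intro Bochner_Integration.integrable_add) auto
  have b: "\<bar>x\<bar> \<le> 1 + x\<^sup>2" for x :: real
  proof -
    have "0 \<le> (\<bar>x\<bar> - 1)\<^sup>2" by simp
    then show ?thesis unfolding power2_diff by (simp add: power2_eq_square)
  qed
  show "AE \<omega> in M. norm (X \<omega>) \<le> norm (1 + (X \<omega>)\<^sup>2)"
    by (rule AE_I2) (use b in simp)
qed (use assms in simp)

lemma (in prob_space) cube_sq:
  fixes X :: "'a \<Rightarrow> real"
  assumes "X \<in> borel_measurable M" "integrable M (\<lambda>\<omega>. \<bar>X \<omega>\<bar> ^ 3)"
  shows "integrable M (\<lambda>\<omega>. (X \<omega>)\<^sup>2)" "integrable M X"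
proof -
  have b: "\<bar>x\<^sup>2\<bar> \<le> \<bar>1 + \<bar>x\<bar> ^ 3\<bar>" for x :: real
  proof (cases "\<bar>x\<bar> \<le> 1")
    case True
    then have "x\<^sup>2 \<le> 1" by (simp add: abs_square_le_1)
    moreover have "0 \<le> \<bar>x\<bar> ^ 3" by simp
    ultimately have "x\<^sup>2 \<le> 1 + \<bar>x\<bar> ^ 3" by linarith
    then show ?thesis by simp
  next
    case False
    have e1: "x\<^sup>2 = \<bar>x\<bar>\<^sup>2" by simp
    have e2: "\<bar>x\<bar>^3 = \<bar>x\<bar> * \<bar>x\<bar>\<^sup>2" by (simp add: power3_eq_cube power2_eq_square)
    have "1 * \<bar>x\<bar>\<^sup>2 \<le> \<bar>x\<bar> * \<bar>x\<bar>\<^sup>2" using False by (intro mult_right_mono) auto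
    then have "x\<^sup>2 \<le> \<bar>x\<bar>^3" unfolding e1 e2 by simp
    then show ?thesis by (simp add: abs_of_nonneg)
  qed
  show "integrable M (\<lambda>\<omega>. (X \<omega>)\<^sup>2)"
  proof (rule Bochner_Integration.integrable_bound[of _ "\<lambda>\<omega>. 1 + \<bar>X \<omega>\<bar> ^ 3"])
    show "integrable M (\<lambda>\<omega>. 1 + \<bar>X \<omega>\<bar> ^ 3)" using assms by (intro Bochner_Integration.integrable_add) auto
    show "AE \<omega> in M. norm ((X \<omega>)\<^sup>2) \<le> norm (1 + \<bar>X \<omega>\<bar> ^ 3)"
      by (rule AE_I2) (use b in simp)
  qed (use assms in simp)
  then show "integrable M X" using l2_integrable assms by blast
qed

locale setting = prob_space M for M :: "'a measure" +
  fixes d :: nat and Ds :: "nat \<Rightarrow> nat" and \<gamma> :: real and L :: nat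
    and s n r :: "'a \<Rightarrow> (nat \<Rightarrow> nat) \<Rightarrow> real" and h :: "(nat \<Rightarrow> nat) \<Rightarrow> real"
    and \<phi> \<phi>t :: "nat \<Rightarrow> (nat \<Rightarrow> nat) \<Rightarrow> real"
    and \<Theta> \<Theta>' :: "nat \<Rightarrow> real \<Rightarrow> real"
    and rl :: "nat \<Rightarrow> 'a \<Rightarrow> real"
  assumes d_pos: "d \<ge> 1" and Ds_pos: "\<forall>i<d. Ds i > 0"
    and gamma_pos: "\<gamma> > 0"
    and s_meas: "\<forall>x\<in>grid d Ds. (\<lambda>\<omega>. s \<omega> x) \<in> borel_measurable M"
    and s_var: "\<forall>x\<in>grid d Ds. integrable M (\<lambda>\<omega>. (s \<omega> x)\<^sup>2)"
    and n_normal: "\<forall>x\<in>grid d Ds. distributed M lborel (\<lambda>\<omega>. n \<omega> x) (normal_density 0 (sqrt \<gamma>))"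
    and n_indep: "indep_vars (\<lambda>_. borel) (\<lambda>x \<omega>. n \<omega> x) (grid d Ds)"
    and sn_indep: "indep_var
         (Pi\<^sub>M (grid d Ds) (\<lambda>_. borel)) (\<lambda>\<omega>. restrict (s \<omega>) (grid d Ds))
         (Pi\<^sub>M (grid d Ds) (\<lambda>_. borel)) (\<lambda>\<omega>. restrict (n \<omega>) (grid d Ds))"
    and r_def: "r = (\<lambda>\<omega> x. circ_conv d Ds h (s \<omega>) x + n \<omega> x)"
    and rl_def: "rl = (\<lambda>l \<omega>. ip d Ds (r \<omega>) (\<phi> l))"
    and Theta_cont: "\<forall>l\<in>{1..L}. continuous_on UNIV (\<Theta> l)"
    and Theta_ac: "\<forall>l\<in>{1..L}. \<forall>a b. a \<le> b \<longrightarrow>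
         set_integrable lborel {a..b} (\<Theta>' l) \<and>
         \<Theta> l b - \<Theta> l a = (\<integral>x\<in>{a..b}. \<Theta>' l x \<partial>lborel)"
    and Theta_mom: "\<forall>l\<in>{1..L}. integrable M (\<lambda>\<omega>. \<bar>\<Theta> l (rl l \<omega>)\<bar> ^ 3)"
    and Theta'_mom: "\<forall>l\<in>{1..L}. integrable M (\<lambda>\<omega>. \<bar>\<Theta>' l (rl l \<omega>)\<bar> ^ 3)"
begin

abbreviation "G \<equiv> grid d Ds"
abbreviation "nd \<equiv> normal_density 0 (sqrt \<gamma>)"
abbreviation "NG \<equiv> density lborel nd"
abbreviation "PS \<equiv> Pi\<^sub>M G (\<lambda>_. borel :: real measure)"

lemma G_ne: "G \<noteq> {}" using zero_grid[OF Ds_pos] by auto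

lemma sg: "0 < sqrt \<gamma>" using gamma_pos by simp

lemma n_meas[measurable]: "x \<in> G \<Longrightarrow> (\<lambda>\<omega>. n \<omega> x) \<in> borel_measurable M"
  using n_normal by (auto simp: distributed_def)

lemma s_meas'[measurable]: "x \<in> G \<Longrightarrow> (\<lambda>\<omega>. s \<omega> x) \<in> borel_measurable M"
  using s_meas by auto

lemma n_int: "x \<in> G \<Longrightarrow> integrable M (\<lambda>\<omega>. n \<omega> x)"
  using distributed_integrable[OF bspec[OF n_normal], of x "\<lambda>x. x"] integrable_normal_moment_nz_1[OF sg, of 0]
  by simp

lemma n_mean: "x \<in> G \<Longrightarrow> (\<integral>\<omega>. n \<omega> x \<partial>M) = 0"
  using normal_distributed_expectation[OF sg bspec[OF n_normal]] by simp

lemma n_sq_int: "x \<in> G \<Longrightarrow> integrable M (\<lambda>\<omega>. (n \<omega> x)\<^sup>2)"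
  using distributed_integrable[OF bspec[OF n_normal], of x "\<lambda>x. x\<^sup>2"] integrable_normal_moment[OF sg, of 0 2]
  by simp

lemma n_sq: "x \<in> G \<Longrightarrow> (\<integral>\<omega>. (n \<omega> x)\<^sup>2 \<partial>M) = \<gamma>"
  using distributed_integral[OF bspec[OF n_normal], of x "\<lambda>x. x\<^sup>2"] integral_normal_moment_even[OF sg, of 0 1] gamma_pos
  by simp

lemma n_cross: "x \<in> G \<Longrightarrow> y \<in> G \<Longrightarrow> x \<noteq> y \<Longrightarrow> (\<integral>\<omega>. n \<omega> x * n \<omega> y \<partial>M) = 0"
proof -
  assume x: "x \<in> G" and y: "y \<in> G" and xy: "x \<noteq> y"
  have "indep_vars (\<lambda>_. borel) (\<lambda>x \<omega>. n \<omega> x) {x, y}"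
    using x y by (intro indep_vars_subset[OF n_indep]) auto
  from indep_vars_lebesgue_integral[OF _ this]
  have "(\<integral>\<omega>. (\<Prod>i\<in>{x,y}. n \<omega> i) \<partial>M) = (\<Prod>i\<in>{x,y}. \<integral>\<omega>. n \<omega> i \<partial>M)"
    using x y n_int by auto
  then show ?thesis using xy x y by (simp add: n_mean)
qed

lemma n_prod: "x \<in> G \<Longrightarrow> y \<in> G \<Longrightarrow> (\<integral>\<omega>. n \<omega> x * n \<omega> y \<partial>M) = (if x = y then \<gamma> else 0)"
  using n_cross n_sq by (auto simp: power2_eq_square)

lemma sn_prod: "x \<in> G \<Longrightarrow> y \<in> G \<Longrightarrow> (\<integral>\<omega>. s \<omega> y * n \<omega> x \<partial>M) = 0"
proof -
  assume x: "x \<in> G" and y: "y \<in> G"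
  have "indep_var borel ((\<lambda>f. f y) \<circ> (\<lambda>\<omega>. restrict (s \<omega>) G)) borel ((\<lambda>f. f x) \<circ> (\<lambda>\<omega>. restrict (n \<omega>) G))"
    using x y by (intro indep_var_compose[OF sn_indep] measurable_component_singleton)
  then have "indep_var borel (\<lambda>\<omega>. s \<omega> y) borel (\<lambda>\<omega>. n \<omega> x)"
    using x y by (simp add: comp_def)
  from indep_var_lebesgue_integral[OF this] show ?thesis
    using x y n_int l2_integrable[OF s_meas' s_var[rule_format]] by (simp add: n_mean)
qed

end

context setting begin

definition "X1 \<omega> = restrict (s \<omega>) G"
definition "X2 \<omega> = restrict (n \<omega>) G"
definition "SD = distr M PS X1"
abbreviation "PN \<equiv> Pi\<^sub>M G (\<lambda>_. NG)"

lemma X1_meas[measurable]: "X1 \<in> measurable M PS"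
  unfolding X1_def by (intro measurable_restrict) simp
lemma X2_meas[measurable]: "X2 \<in> measurable M PS"
  unfolding X2_def by (intro measurable_restrict) simp

lemma N_dist: "distr M PS X2 = PN"
proof -
  have "distr M PS (\<lambda>\<omega>. \<lambda>i\<in>G. n \<omega> i) = Pi\<^sub>M G (\<lambda>i. distr M borel (\<lambda>\<omega>. n \<omega> i))"
    using indep_vars_iff_distr_eq_PiM'[OF G_ne, where X="\<lambda>x \<omega>. n \<omega> x"] n_indep by simp
  also have "\<dots> = PN"
  proof (rule PiM_cong[OF refl])
    fix x assume x: "x \<in> G"
    have "distr M borel (\<lambda>\<omega>. n \<omega> x) = distr M lborel (\<lambda>\<omega>. n \<omega> x)" by (rule distr_cong) auto
    also have "\<dots> = NG" using n_normal x unfolding distributed_def by blast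
    finally show "distr M borel (\<lambda>\<omega>. n \<omega> x) = NG" .
  qed
  finally show ?thesis by (simp add: X2_def[abs_def])
qed

lemma J_eq: "distr M (PS \<Otimes>\<^sub>M PS) (\<lambda>\<omega>. (X1 \<omega>, X2 \<omega>)) = SD \<Otimes>\<^sub>M PN"
  using sn_indep[unfolded indep_var_distribution_eq, folded X1_def[abs_def] X2_def[abs_def]] N_dist
  by (simp add: SD_def X1_def X2_def)

lemma SD_prob: "prob_space SD" unfolding SD_def by (rule prob_space_distr) simp
lemma NG_prob: "prob_space NG" by (rule prob_space_normal_density[OF sg])

lemma PN_sf: "sigma_finite_measure (Pi\<^sub>M I (\<lambda>_. NG))" if "finite I"
proof -
  interpret product_sigma_finite "\<lambda>_. NG"
    unfolding product_sigma_finite_def using prob_space_imp_sigma_finite[OF NG_prob] by simp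
  interpret finite_product_sigma_finite "\<lambda>_. NG" I by standard fact
  show ?thesis ..
qed

definition "Rl l \<sigma> \<nu> = (\<Sum>y\<in>G. (circ_conv d Ds h \<sigma> y + \<nu> y) * \<phi> l y)"

lemma rl_eq: "rl l \<omega> = Rl l (X1 \<omega>) (X2 \<omega>)"
  unfolding rl_def r_def ip_def Rl_def X1_def X2_def circ_conv_def
  by (intro sum.cong refl arg_cong2[where f="(*)"] arg_cong2[where f="(+)"]) auto

lemma comp_meas: "y \<in> I \<Longrightarrow> (\<lambda>\<sigma>. \<sigma> y) \<in> borel_measurable (Pi\<^sub>M I (\<lambda>_. borel))"
  by (rule measurable_component_singleton)

lemma Rl_meas[measurable]: "(\<lambda>p. Rl l (fst p) (snd p)) \<in> borel_measurable (PS \<Otimes>\<^sub>M PS)"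
  unfolding Rl_def circ_conv_def
  by (intro borel_measurable_sum borel_measurable_add borel_measurable_times borel_measurable_const
      measurable_compose[OF measurable_fst comp_meas] measurable_compose[OF measurable_snd comp_meas])

lemma Theta_meas[measurable]: "l \<in> {1..L} \<Longrightarrow> \<Theta> l \<in> borel_measurable borel"
  using Theta_cont by (intro borel_measurable_continuous_onI) auto
lemma Theta'_meas[measurable]: "l \<in> {1..L} \<Longrightarrow> \<Theta>' l \<in> borel_measurable borel"
  using Theta_ac by (intro borel_measurable_from_ac) auto

lemma rl_meas[measurable]: "(\<lambda>\<omega>. rl l \<omega>) \<in> borel_measurable M"
proof -
  have "(\<lambda>\<omega>. (X1 \<omega>, X2 \<omega>)) \<in> measurable M (PS \<Otimes>\<^sub>M PS)" by measurable
  from measurable_compose[OF this Rl_meas] show ?thesis unfolding rl_eq by simp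
qed

end

context setting begin

lemma PSF: "product_sigma_finite (\<lambda>_. NG)"
  unfolding product_sigma_finite_def using prob_space_imp_sigma_finite[OF NG_prob] by simp

lemma comp_meas_NG[measurable]: "y \<in> I \<Longrightarrow> (\<lambda>\<nu>. \<nu> y) \<in> borel_measurable (Pi\<^sub>M I (\<lambda>_. NG))"
  using measurable_component_singleton[of y I "\<lambda>_. NG"] by (simp add: measurable_lborel2[symmetric])

lemma inner_stein:
  assumes l: "l \<in> {1..L}" and x: "x \<in> G"
    and i1: "integrable PN (\<lambda>\<nu>. \<Theta> l (Rl l \<sigma> \<nu>) * \<nu> x)"
    and i2: "integrable PN (\<lambda>\<nu>. \<Theta>' l (Rl l \<sigma> \<nu>))"
  shows "(\<integral>\<nu>. \<Theta> l (Rl l \<sigma> \<nu>) * \<nu> x \<partial>PN) = \<gamma> * \<phi> l x * (\<integral>\<nu>. \<Theta>' l (Rl l \<sigma> \<nu>) \<partial>PN)"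
proof -
  interpret PS': product_sigma_finite "\<lambda>_. NG" by (rule PSF)
  have NGsf: "sigma_finite_measure NG" using prob_space_imp_sigma_finite[OF NG_prob] .
  define I where "I = G - {x}"
  have GI: "G = insert x I" "x \<notin> I" "finite I" using x by (auto simp: I_def)
  interpret PI: finite_product_sigma_finite "\<lambda>_. NG" I by standard (rule GI(3))
  define c where "c = \<phi> l x"
  define b where "b \<nu>' = (\<Sum>y\<in>G. circ_conv d Ds h \<sigma> y * \<phi> l y) + (\<Sum>y\<in>I. \<nu>' y * \<phi> l y)" for \<nu>'
  have bm[measurable]: "b \<in> borel_measurable (Pi\<^sub>M I (\<lambda>_. NG))"
    unfolding b_def by (intro borel_measurable_add borel_measurable_const borel_measurable_sum borel_measurable_times comp_meas_NG)
  have Rl_upd: "Rl l \<sigma> (\<nu>'(x := z)) = b \<nu>' + c * z" for \<nu>' z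
  proof -
    have "Rl l \<sigma> (\<nu>'(x := z)) = (\<Sum>y\<in>G. circ_conv d Ds h \<sigma> y * \<phi> l y) + (\<Sum>y\<in>G. (\<nu>'(x:=z)) y * \<phi> l y)"
      unfolding Rl_def by (simp add: sum.distrib distrib_right)
    also have "(\<Sum>y\<in>G. (\<nu>'(x:=z)) y * \<phi> l y) = z * \<phi> l x + (\<Sum>y\<in>I. \<nu>' y * \<phi> l y)"
    proof -
      have "(\<Sum>y\<in>I. (\<nu>'(x:=z)) y * \<phi> l y) = (\<Sum>y\<in>I. \<nu>' y * \<phi> l y)"
        using GI(2) by (intro sum.cong refl) auto
      then show ?thesis unfolding GI(1) using GI(2,3) by simp
    qed
    finally have eq: "Rl l \<sigma> (\<nu>'(x := z)) = (\<Sum>y\<in>G. circ_conv d Ds h \<sigma> y * \<phi> l y) + (z * \<phi> l x + (\<Sum>y\<in>I. \<nu>' y * \<phi> l y))" .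
    show ?thesis unfolding eq b_def c_def by (simp add: algebra_simps)
  qed
  have acl: "\<forall>a b. a \<le> b \<longrightarrow> set_integrable lborel {a..b} (\<Theta>' l) \<and> \<Theta> l b - \<Theta> l a = (\<integral>x\<in>{a..b}. \<Theta>' l x \<partial>lborel)"
    using Theta_ac l by blast
  have i1': "integrable (Pi\<^sub>M (insert x I) (\<lambda>_. NG)) (\<lambda>\<nu>. \<Theta> l (Rl l \<sigma> \<nu>) * \<nu> x)" using i1 GI by simp
  have i2': "integrable (Pi\<^sub>M (insert x I) (\<lambda>_. NG)) (\<lambda>\<nu>. \<Theta>' l (Rl l \<sigma> \<nu>))" using i2 GI by simp
  have E1: "(\<integral>\<nu>. \<Theta> l (Rl l \<sigma> \<nu>) * \<nu> x \<partial>PN) = (\<integral>\<nu>'. (\<integral>z. \<Theta> l (b \<nu>' + c * z) * z \<partial>NG) \<partial>Pi\<^sub>M I (\<lambda>_. NG))"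
    using PS'.product_integral_insert[OF GI(3) GI(2) i1'] GI(1) by (simp add: Rl_upd)
  have E2: "(\<integral>\<nu>. \<Theta>' l (Rl l \<sigma> \<nu>) \<partial>PN) = (\<integral>\<nu>'. (\<integral>z. \<Theta>' l (b \<nu>' + c * z) \<partial>NG) \<partial>Pi\<^sub>M I (\<lambda>_. NG))"
    using PS'.product_integral_insert[OF GI(3) GI(2) i2'] GI(1) by (simp add: Rl_upd)
  have AEi: "AE \<nu>' in Pi\<^sub>M I (\<lambda>_. NG). integrable NG (\<lambda>z. \<Theta>' l (b \<nu>' + c * z))"
    using PS'.AE_integrable_insert[OF GI(3) GI(2) i2'] by (simp add: Rl_upd)
  have AEe: "AE \<nu>' in Pi\<^sub>M I (\<lambda>_. NG). (\<integral>z. \<Theta> l (b \<nu>' + c * z) * z \<partial>NG) = \<gamma> * c * (\<integral>z. \<Theta>' l (b \<nu>' + c * z) \<partial>NG)"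
    using AEi by eventually_elim (rule stein_gauss(2)[OF gamma_pos acl])
  have "(\<integral>\<nu>'. (\<integral>z. \<Theta> l (b \<nu>' + c * z) * z \<partial>NG) \<partial>Pi\<^sub>M I (\<lambda>_. NG))
      = (\<integral>\<nu>'. \<gamma> * c * (\<integral>z. \<Theta>' l (b \<nu>' + c * z) \<partial>NG) \<partial>Pi\<^sub>M I (\<lambda>_. NG))"
  proof (rule integral_cong_AE[OF _ _ AEe])
    have sm: "(\<lambda>p. snd p) \<in> borel_measurable (Pi\<^sub>M I (\<lambda>_. NG) \<Otimes>\<^sub>M NG)"
      using measurable_snd[of "Pi\<^sub>M I (\<lambda>_. NG)" NG] by (simp add: measurable_lborel2[symmetric])
    have pm: "(\<lambda>p. b (fst p) + c * snd p) \<in> borel_measurable (Pi\<^sub>M I (\<lambda>_. NG) \<Otimes>\<^sub>M NG)"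
      by (intro borel_measurable_add borel_measurable_times borel_measurable_const sm
          measurable_compose[OF measurable_fst bm])
    have f1: "(\<lambda>(\<nu>', z). \<Theta> l (b \<nu>' + c * z) * z) \<in> borel_measurable (Pi\<^sub>M I (\<lambda>_. NG) \<Otimes>\<^sub>M NG)"
      unfolding case_prod_beta using l by (intro borel_measurable_times sm measurable_compose[OF pm Theta_meas])
    have f2: "(\<lambda>(\<nu>', z). \<Theta>' l (b \<nu>' + c * z)) \<in> borel_measurable (Pi\<^sub>M I (\<lambda>_. NG) \<Otimes>\<^sub>M NG)"
      unfolding case_prod_beta using l by (intro measurable_compose[OF pm Theta'_meas])
    show "(\<lambda>\<nu>'. \<integral>z. \<Theta> l (b \<nu>' + c * z) * z \<partial>NG) \<in> borel_measurable (Pi\<^sub>M I (\<lambda>_. NG))"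
      by (rule sigma_finite_measure.borel_measurable_lebesgue_integral[OF NGsf f1])
    show "(\<lambda>\<nu>'. \<gamma> * c * (\<integral>z. \<Theta>' l (b \<nu>' + c * z) \<partial>NG)) \<in> borel_measurable (Pi\<^sub>M I (\<lambda>_. NG))"
      by (intro borel_measurable_times borel_measurable_const sigma_finite_measure.borel_measurable_lebesgue_integral[OF NGsf f2])
  qed
  then show ?thesis unfolding E1 E2 c_def by simp
qed

lemma theta_l2:
  assumes l: "l \<in> {1..L}"
  shows "(\<lambda>\<omega>. \<Theta> l (rl l \<omega>)) \<in> borel_measurable M" "integrable M (\<lambda>\<omega>. (\<Theta> l (rl l \<omega>))\<^sup>2)"
    and "(\<lambda>\<omega>. \<Theta>' l (rl l \<omega>)) \<in> borel_measurable M" "integrable M (\<lambda>\<omega>. \<Theta>' l (rl l \<omega>))"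
proof -
  show m1: "(\<lambda>\<omega>. \<Theta> l (rl l \<omega>)) \<in> borel_measurable M" by (rule measurable_compose[OF rl_meas Theta_meas[OF l]])
  show "integrable M (\<lambda>\<omega>. (\<Theta> l (rl l \<omega>))\<^sup>2)" using cube_sq(1)[OF m1] Theta_mom l by auto
  show m2: "(\<lambda>\<omega>. \<Theta>' l (rl l \<omega>)) \<in> borel_measurable M" by (rule measurable_compose[OF rl_meas Theta'_meas[OF l]])
  show "integrable M (\<lambda>\<omega>. \<Theta>' l (rl l \<omega>))" using cube_sq(2)[OF m2] Theta'_mom l by auto
qed

lemma stein_M:
  assumes l: "l \<in> {1..L}" and x: "x \<in> G"
  shows "(\<integral>\<omega>. \<Theta> l (rl l \<omega>) * n \<omega> x \<partial>M) = \<gamma> * \<phi> l x * (\<integral>\<omega>. \<Theta>' l (rl l \<omega>) \<partial>M)"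
proof -
  define F1 where "F1 p = \<Theta> l (Rl l (fst p) (snd p)) * snd p x" for p
  define F2 where "F2 p = \<Theta>' l (Rl l (fst p) (snd p))" for p
  have F1m: "F1 \<in> borel_measurable (PS \<Otimes>\<^sub>M PS)"
    unfolding F1_def using l x
    by (intro borel_measurable_times measurable_compose[OF Rl_meas Theta_meas]
        measurable_compose[OF measurable_snd comp_meas])
  have F2m: "F2 \<in> borel_measurable (PS \<Otimes>\<^sub>M PS)"
    unfolding F2_def using l by (intro measurable_compose[OF Rl_meas Theta'_meas])
  have XX: "(\<lambda>\<omega>. (X1 \<omega>, X2 \<omega>)) \<in> measurable M (PS \<Otimes>\<^sub>M PS)" by measurable
  have e1: "(\<lambda>\<omega>. \<Theta> l (rl l \<omega>) * n \<omega> x) = (\<lambda>\<omega>. F1 (X1 \<omega>, X2 \<omega>))"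
    using x by (auto simp: F1_def rl_eq X2_def)
  have e2: "(\<lambda>\<omega>. \<Theta>' l (rl l \<omega>)) = (\<lambda>\<omega>. F2 (X1 \<omega>, X2 \<omega>))"
    by (auto simp: F2_def rl_eq)
  note th = theta_l2[OF l]
  have intM1: "integrable M (\<lambda>\<omega>. \<Theta> l (rl l \<omega>) * n \<omega> x)"
    by (rule int_mult_l2[OF th(1,2) n_meas[OF x] n_sq_int[OF x]])
  have intJ1: "integrable (SD \<Otimes>\<^sub>M PN) F1"
    using intM1 unfolding e1 J_eq[symmetric] by (subst integrable_distr_eq[OF XX F1m])
  have intJ2: "integrable (SD \<Otimes>\<^sub>M PN) F2"
    using th(4) unfolding e2 J_eq[symmetric] by (subst integrable_distr_eq[OF XX F2m])
  have EM1: "(\<integral>\<omega>. \<Theta> l (rl l \<omega>) * n \<omega> x \<partial>M) = integral\<^sup>L (SD \<Otimes>\<^sub>M PN) F1"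
    unfolding e1 J_eq[symmetric] by (simp add: integral_distr[OF XX F1m])
  have EM2: "(\<integral>\<omega>. \<Theta>' l (rl l \<omega>) \<partial>M) = integral\<^sup>L (SD \<Otimes>\<^sub>M PN) F2"
    unfolding e2 J_eq[symmetric] by (simp add: integral_distr[OF XX F2m])
  interpret SDs: sigma_finite_measure SD using prob_space_imp_sigma_finite[OF SD_prob] .
  interpret PNs: sigma_finite_measure PN by (rule PN_sf) simp
  interpret J: pair_sigma_finite SD PN ..
  have "integral\<^sup>L (SD \<Otimes>\<^sub>M PN) F1 = (\<integral>\<sigma>. (\<integral>\<nu>. F1 (\<sigma>, \<nu>) \<partial>PN) \<partial>SD)"
    by (rule J.integral_fst'[OF intJ1, symmetric])
  also have "\<dots> = (\<integral>\<sigma>. \<gamma> * \<phi> l x * (\<integral>\<nu>. F2 (\<sigma>, \<nu>) \<partial>PN) \<partial>SD)"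
  proof (rule integral_cong_AE)
    show "(\<lambda>\<sigma>. \<integral>\<nu>. F1 (\<sigma>, \<nu>) \<partial>PN) \<in> borel_measurable SD"
      using J.integrable_fst'[OF intJ1] by auto
    show "(\<lambda>\<sigma>. \<gamma> * \<phi> l x * (\<integral>\<nu>. F2 (\<sigma>, \<nu>) \<partial>PN)) \<in> borel_measurable SD"
      using J.integrable_fst'[OF intJ2] by auto
    show "AE \<sigma> in SD. (\<integral>\<nu>. F1 (\<sigma>, \<nu>) \<partial>PN) = \<gamma> * \<phi> l x * (\<integral>\<nu>. F2 (\<sigma>, \<nu>) \<partial>PN)"
      using J.AE_integrable_fst'[OF intJ1] J.AE_integrable_fst'[OF intJ2]
    proof eventually_elim
      case (elim \<sigma>)
      then show ?case unfolding F1_def F2_def using inner_stein[OF l x] by simp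
    qed
  qed
  also have "\<dots> = \<gamma> * \<phi> l x * integral\<^sup>L (SD \<Otimes>\<^sub>M PN) F2"
    by (simp add: J.integral_fst'[OF intJ2])
  finally show ?thesis using EM1 EM2 by simp
qed

end

lemma cmod_sq_split: "(cmod a)\<^sup>2 = (cmod (a - b))\<^sup>2 + 2 * Re (a * cnj b) - (cmod b)\<^sup>2"
  unfolding cmod_power2 by (simp add: power2_eq_square algebra_simps)

lemma Re_dsum:
  fixes a b :: "_ \<Rightarrow> real" and u w :: "_ \<Rightarrow> complex"
  assumes "finite A" "finite B"
  shows "Re ((\<Sum>i\<in>A. complex_of_real (a i) * u i) * cnj ((\<Sum>j\<in>B. complex_of_real (b j) * w j) / z))
       = (\<Sum>i\<in>A. \<Sum>j\<in>B. a i * b j * Re (u i * cnj (w j / z)))"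
proof -
  have "(\<Sum>j\<in>B. complex_of_real (b j) * w j) / z = (\<Sum>j\<in>B. complex_of_real (b j) * (w j / z))"
    by (simp add: sum_divide_distrib)
  then have "cnj ((\<Sum>j\<in>B. complex_of_real (b j) * w j) / z) = (\<Sum>j\<in>B. complex_of_real (b j) * cnj (w j / z))"
    by (simp add: cnj_sum)
  then have "(\<Sum>i\<in>A. complex_of_real (a i) * u i) * cnj ((\<Sum>j\<in>B. complex_of_real (b j) * w j) / z)
      = (\<Sum>i\<in>A. \<Sum>j\<in>B. complex_of_real (a i * b j) * (u i * cnj (w j / z)))"
    by (simp add: sum_product algebra_simps)
  moreover have "Re (complex_of_real r * Y) = r * Re Y" for r Y by simp
  ultimately show ?thesis by (simp only: Re_sum)
qed

lemma re_ofr: "Re (complex_of_real r * W / c) = r * Re (W / c)"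
proof -
  have a: "Re (complex_of_real r * V) = r * Re V" for V by simp
  show ?thesis unfolding times_divide_eq_right[symmetric] a ..
qed

lemma dsum_E:
  assumes "finite A" "finite B" "\<And>i j. i \<in> A \<Longrightarrow> j \<in> B \<Longrightarrow> integrable M (f i j)"
  shows "(\<integral>\<omega>. (\<Sum>i\<in>A. \<Sum>j\<in>B. f i j \<omega> * k i j) \<partial>M) = (\<Sum>i\<in>A. \<Sum>j\<in>B. (\<integral>\<omega>. f i j \<omega> \<partial>M) * (k i j :: real))"
  using assms by (simp add: integral_sum integrable_sum)

lemma l2_scale': "l2 M Z \<Longrightarrow> l2 M (\<lambda>\<omega>. Z \<omega> * c)"
  using l2_scale[of M Z c] by (simp add: mult.commute)

lemma dft_add: "dft d Ds (\<lambda>x. f x + g x) p = dft d Ds f p + dft d Ds g p"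
  by (simp add: dft_def sum.distrib algebra_simps)

context setting begin

abbreviation "cx x p \<equiv> cis (-2*pi*phase d Ds x p)"

lemma dft_expand: "dft d Ds f p = (\<Sum>x\<in>G. complex_of_real (f x) * cx x p)"
  by (simp add: dft_def)

lemma R_eq: "dft d Ds (r \<omega>) p = dft d Ds h p * dft d Ds (s \<omega>) p + dft d Ds (n \<omega>) p"
  unfolding r_def by (simp add: dft_add dft_conv[OF Ds_pos])

lemma l2_Th: "l \<in> {1..L} \<Longrightarrow> l2 M (\<lambda>\<omega>. complex_of_real (\<Theta> l (rl l \<omega>)))"
  using theta_l2 by (intro l2_of_real) auto

lemma l2_Sh: "l2 M (\<lambda>\<omega>. \<Sum>l=1..L. complex_of_real (\<Theta> l (rl l \<omega>)) * dft d Ds (\<phi>t l) p)"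
  by (intro l2_sum l2_scale' l2_Th) auto

lemma l2_S: "l2 M (\<lambda>\<omega>. dft d Ds (s \<omega>) p)"
  unfolding dft_def using s_var by (intro l2_sum l2_scale' l2_of_real) auto

lemma l2_N: "l2 M (\<lambda>\<omega>. dft d Ds (n \<omega>) p)"
  unfolding dft_def using n_sq_int by (intro l2_sum l2_scale' l2_of_real) auto

lemma cx_norm: "cx x p * cnj (cx x p) = 1"
  by (simp add: cis_cnj cis_mult)

lemma E_NN: "(\<integral>\<omega>. Re (dft d Ds (n \<omega>) p * cnj (dft d Ds (n \<omega>) p / 1)) \<partial>M) = \<gamma> * real (gridsize d Ds)"
proof -
  have "(\<integral>\<omega>. Re (dft d Ds (n \<omega>) p * cnj (dft d Ds (n \<omega>) p / 1)) \<partial>M)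
     = (\<integral>\<omega>. (\<Sum>x\<in>G. \<Sum>y\<in>G. n \<omega> x * n \<omega> y * Re (cx x p * cnj (cx y p / 1))) \<partial>M)"
    unfolding dft_def by (subst Re_dsum) auto
  also have "\<dots> = (\<Sum>x\<in>G. \<Sum>y\<in>G. (\<integral>\<omega>. n \<omega> x * n \<omega> y \<partial>M) * Re (cx x p * cnj (cx y p / 1)))"
    by (rule dsum_E) (auto intro!: int_mult_l2 n_sq_int)
  also have "\<dots> = (\<Sum>x\<in>G. \<gamma>)"
  proof (intro sum.cong refl)
    fix x assume x: "x \<in> G"
    have "(\<Sum>y\<in>G. (\<integral>\<omega>. n \<omega> x * n \<omega> y \<partial>M) * Re (cx x p * cnj (cx y p / 1)))
        = (\<Sum>y\<in>G. if x = y then \<gamma> * Re (cx x p * cnj (cx y p / 1)) else 0)"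
      using x by (intro sum.cong refl) (auto simp: n_prod)
    also have "\<dots> = \<gamma> * Re (cx x p * cnj (cx x p / 1))" using x by (simp add: sum.delta)
    also have "\<dots> = \<gamma>" using cx_norm[of x p] by simp
    finally show "(\<Sum>y\<in>G. (\<integral>\<omega>. n \<omega> x * n \<omega> y \<partial>M) * Re (cx x p * cnj (cx y p / 1))) = \<gamma>" .
  qed
  also have "\<dots> = \<gamma> * real (gridsize d Ds)"
  proof -
    have "card G = gridsize d Ds"
    proof -
      have "card G = card (PiE {..<d} (\<lambda>i. {..<Ds i}))"
        unfolding grid_eq by (rule card_image[OF inj_gext])
      also have "\<dots> = gridsize d Ds" by (simp add: card_PiE gridsize_def)
      finally show ?thesis .
    qed
    then show ?thesis by simp
  qed
  finally show ?thesis .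
qed

lemma E_SN: "(\<integral>\<omega>. Re (dft d Ds (s \<omega>) p * cnj (dft d Ds (n \<omega>) p / z)) \<partial>M) = 0"
proof -
  have "(\<integral>\<omega>. Re (dft d Ds (s \<omega>) p * cnj (dft d Ds (n \<omega>) p / z)) \<partial>M)
     = (\<integral>\<omega>. (\<Sum>y\<in>G. \<Sum>x\<in>G. s \<omega> y * n \<omega> x * Re (cx y p * cnj (cx x p / z))) \<partial>M)"
    unfolding dft_def by (subst Re_dsum) auto
  also have "\<dots> = (\<Sum>y\<in>G. \<Sum>x\<in>G. (\<integral>\<omega>. s \<omega> y * n \<omega> x \<partial>M) * Re (cx y p * cnj (cx x p / z)))"
    by (rule dsum_E) (auto intro!: int_mult_l2 n_sq_int s_var[rule_format])
  also have "\<dots> = 0" by (simp add: sn_prod)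
  finally show ?thesis .
qed

lemma E_ThN: "(\<integral>\<omega>. Re ((\<Sum>l=1..L. complex_of_real (\<Theta> l (rl l \<omega>)) * dft d Ds (\<phi>t l) p) * cnj (dft d Ds (n \<omega>) p / z)) \<partial>M)
  = \<gamma> * (\<Sum>l=1..L. (\<integral>\<omega>. \<Theta>' l (rl l \<omega>) \<partial>M) * Re (dft d Ds (\<phi> l) p * cnj (dft d Ds (\<phi>t l) p) / z))"
proof -
  have "(\<integral>\<omega>. Re ((\<Sum>l=1..L. complex_of_real (\<Theta> l (rl l \<omega>)) * dft d Ds (\<phi>t l) p) * cnj (dft d Ds (n \<omega>) p / z)) \<partial>M)
     = (\<integral>\<omega>. (\<Sum>l\<in>{1..L}. \<Sum>x\<in>G. \<Theta> l (rl l \<omega>) * n \<omega> x * Re (dft d Ds (\<phi>t l) p * cnj (cx x p / z))) \<partial>M)"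
    unfolding dft_expand[of "n \<omega>" for \<omega>] by (subst Re_dsum) auto
  also have "\<dots> = (\<Sum>l\<in>{1..L}. \<Sum>x\<in>G. (\<integral>\<omega>. \<Theta> l (rl l \<omega>) * n \<omega> x \<partial>M) * Re (dft d Ds (\<phi>t l) p * cnj (cx x p / z)))"
    by (rule dsum_E) (auto intro!: int_mult_l2 n_sq_int theta_l2)
  also have "\<dots> = (\<Sum>l\<in>{1..L}. \<Sum>x\<in>G. \<gamma> * (\<integral>\<omega>. \<Theta>' l (rl l \<omega>) \<partial>M) * (\<phi> l x * Re (dft d Ds (\<phi>t l) p * cnj (cx x p / z))))"
    by (intro sum.cong refl) (simp add: stein_M)
  also have "\<dots> = (\<Sum>l\<in>{1..L}. \<gamma> * (\<integral>\<omega>. \<Theta>' l (rl l \<omega>) \<partial>M) * Re (dft d Ds (\<phi>t l) p * cnj (dft d Ds (\<phi> l) p / z)))"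
  proof (intro sum.cong refl)
    fix l :: nat
    have e: "dft d Ds (\<phi>t l) p * cnj (dft d Ds (\<phi> l) p / z) = (\<Sum>x\<in>G. complex_of_real (\<phi> l x) * (dft d Ds (\<phi>t l) p * cnj (cx x p / z)))"
      unfolding dft_expand[of "\<phi> l"] sum_divide_distrib cnj_sum sum_distrib_left
      by (intro sum.cong refl) (simp add: ac_simps)
    have a: "Re (complex_of_real r * V) = r * Re V" for r V by simp
    have "Re (dft d Ds (\<phi>t l) p * cnj (dft d Ds (\<phi> l) p / z)) = (\<Sum>x\<in>G. \<phi> l x * Re (dft d Ds (\<phi>t l) p * cnj (cx x p / z)))"
      unfolding e Re_sum a ..
    then show "(\<Sum>x\<in>G. \<gamma> * (\<integral>\<omega>. \<Theta>' l (rl l \<omega>) \<partial>M) * (\<phi> l x * Re (dft d Ds (\<phi>t l) p * cnj (cx x p / z))))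
        = \<gamma> * (\<integral>\<omega>. \<Theta>' l (rl l \<omega>) \<partial>M) * Re (dft d Ds (\<phi>t l) p * cnj (dft d Ds (\<phi> l) p / z))"
      by (simp add: sum_distrib_left)
  qed
  also have "\<dots> = \<gamma> * (\<Sum>l=1..L. (\<integral>\<omega>. \<Theta>' l (rl l \<omega>) \<partial>M) * Re (dft d Ds (\<phi> l) p * cnj (dft d Ds (\<phi>t l) p) / z))"
  proof -
    have "Re (a * cnj (b / z)) = Re (b * cnj a / z)" for a b :: complex
    proof -
      have "cnj (a * cnj (b / z)) = b * cnj a / z" by (simp add: complex_cnj_divide)
      then show ?thesis by (metis cnj.sel(1))
    qed
    then show ?thesis by (simp add: sum_distrib_left ac_simps)
  qed
  finally show ?thesis .
qed

end

lemma Re_cnj_self: "Re (z * cnj (z / 1)) = (cmod z)\<^sup>2"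
  unfolding cmod_power2 by (simp add: power2_eq_square)

context setting begin

lemma pointwise:
  assumes p: "p \<in> G" and H: "dft d Ds h p \<noteq> 0"
  shows "(\<integral>\<omega>. (cmod ((\<Sum>l=1..L. complex_of_real (\<Theta> l (rl l \<omega>)) * dft d Ds (\<phi>t l) p) - dft d Ds (s \<omega>) p))\<^sup>2 \<partial>M)
       = (\<integral>\<omega>. (cmod ((\<Sum>l=1..L. complex_of_real (\<Theta> l (rl l \<omega>)) * dft d Ds (\<phi>t l) p) - dft d Ds (r \<omega>) p / dft d Ds h p))\<^sup>2 \<partial>M)
         - \<gamma> * real (gridsize d Ds) / (cmod (dft d Ds h p))\<^sup>2
         + 2 * \<gamma> * (\<Sum>l=1..L. (\<integral>\<omega>. \<Theta>' l (rl l \<omega>) \<partial>M)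
                * Re (dft d Ds (\<phi> l) p * cnj (dft d Ds (\<phi>t l) p) / dft d Ds h p))"
proof -
  define Hp where "Hp = dft d Ds h p"
  define Sh where "Sh \<omega> = (\<Sum>l=1..L. complex_of_real (\<Theta> l (rl l \<omega>)) * dft d Ds (\<phi>t l) p)" for \<omega>
  define Sd where "Sd \<omega> = dft d Ds (s \<omega>) p" for \<omega>
  define Nd where "Nd \<omega> = dft d Ds (n \<omega>) p" for \<omega>
  define B where "B \<omega> = Nd \<omega> / Hp" for \<omega>
  have RH: "dft d Ds (r \<omega>) p / Hp = Sd \<omega> + B \<omega>" for \<omega>
    using H by (simp add: R_eq Hp_def Sd_def Nd_def B_def field_simps)
  have lSh: "l2 M Sh" unfolding Sh_def[abs_def] by (rule l2_Sh)
  have lSd: "l2 M Sd" unfolding Sd_def[abs_def] by (rule l2_S)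
  have lNd: "l2 M Nd" unfolding Nd_def[abs_def] by (rule l2_N)
  have lB: "l2 M B" unfolding B_def[abs_def] by (rule l2_div[OF lNd])
  have lN1: "l2 M (\<lambda>\<omega>. Nd \<omega> / 1)" by (rule l2_div[OF lNd])
  have lY: "l2 M (\<lambda>\<omega>. Sh \<omega> - Sd \<omega> - B \<omega>)" by (intro l2_diff lSh lSd lB)
  have pw: "(cmod (Sh \<omega> - Sd \<omega>))\<^sup>2 = (cmod (Sh \<omega> - Sd \<omega> - B \<omega>))\<^sup>2 + 2 * Re (Sh \<omega> * cnj (Nd \<omega> / Hp))
        - 2 * Re (Sd \<omega> * cnj (Nd \<omega> / Hp)) - Re (Nd \<omega> * cnj (Nd \<omega> / 1)) / (cmod Hp)\<^sup>2" for \<omega>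
  proof -
    have "(cmod (Sh \<omega> - Sd \<omega>))\<^sup>2 = (cmod (Sh \<omega> - Sd \<omega> - B \<omega>))\<^sup>2 + 2 * Re ((Sh \<omega> - Sd \<omega>) * cnj (B \<omega>)) - (cmod (B \<omega>))\<^sup>2"
      by (rule cmod_sq_split)
    moreover have "Re ((Sh \<omega> - Sd \<omega>) * cnj (B \<omega>)) = Re (Sh \<omega> * cnj (Nd \<omega> / Hp)) - Re (Sd \<omega> * cnj (Nd \<omega> / Hp))"
      by (simp only: B_def left_diff_distrib minus_complex.sel)
    moreover have "(cmod (B \<omega>))\<^sup>2 = Re (Nd \<omega> * cnj (Nd \<omega> / 1)) / (cmod Hp)\<^sup>2"
      by (simp only: Re_cnj_self B_def norm_divide power_divide)
    ultimately show ?thesis by simp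
  qed
  have i1: "integrable M (\<lambda>\<omega>. (cmod (Sh \<omega> - Sd \<omega> - B \<omega>))\<^sup>2)" using lY by (rule l2_int)
  have i2: "integrable M (\<lambda>\<omega>. Re (Sh \<omega> * cnj (Nd \<omega> / Hp)))" by (rule int_Re_cnj[OF lSh l2_div[OF lNd]])
  have i3: "integrable M (\<lambda>\<omega>. Re (Sd \<omega> * cnj (Nd \<omega> / Hp)))" by (rule int_Re_cnj[OF lSd l2_div[OF lNd]])
  have i4: "integrable M (\<lambda>\<omega>. Re (Nd \<omega> * cnj (Nd \<omega> / 1)))" by (rule int_Re_cnj[OF lNd lN1])
  have "(\<integral>\<omega>. (cmod (Sh \<omega> - Sd \<omega>))\<^sup>2 \<partial>M)
     = (\<integral>\<omega>. (cmod (Sh \<omega> - Sd \<omega> - B \<omega>))\<^sup>2 + 2 * Re (Sh \<omega> * cnj (Nd \<omega> / Hp))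
        - 2 * Re (Sd \<omega> * cnj (Nd \<omega> / Hp)) - Re (Nd \<omega> * cnj (Nd \<omega> / 1)) / (cmod Hp)\<^sup>2 \<partial>M)"
    by (simp only: pw)
  also have "\<dots> = (\<integral>\<omega>. (cmod (Sh \<omega> - Sd \<omega> - B \<omega>))\<^sup>2 \<partial>M) + 2 * (\<integral>\<omega>. Re (Sh \<omega> * cnj (Nd \<omega> / Hp)) \<partial>M)
        - 2 * (\<integral>\<omega>. Re (Sd \<omega> * cnj (Nd \<omega> / Hp)) \<partial>M) - (\<integral>\<omega>. Re (Nd \<omega> * cnj (Nd \<omega> / 1)) \<partial>M) / (cmod Hp)\<^sup>2"
    using i1 i2 i3 i4 by simp
  also have "(\<integral>\<omega>. Re (Sh \<omega> * cnj (Nd \<omega> / Hp)) \<partial>M)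
      = \<gamma> * (\<Sum>l=1..L. (\<integral>\<omega>. \<Theta>' l (rl l \<omega>) \<partial>M) * Re (dft d Ds (\<phi> l) p * cnj (dft d Ds (\<phi>t l) p) / Hp))"
    unfolding Sh_def Nd_def by (rule E_ThN)
  also have "(\<integral>\<omega>. Re (Sd \<omega> * cnj (Nd \<omega> / Hp)) \<partial>M) = 0"
    unfolding Sd_def Nd_def by (rule E_SN)
  also have "(\<integral>\<omega>. Re (Nd \<omega> * cnj (Nd \<omega> / 1)) \<partial>M) = \<gamma> * real (gridsize d Ds)"
    unfolding Nd_def by (rule E_NN)
  also have "(\<lambda>\<omega>. Sh \<omega> - Sd \<omega> - B \<omega>) = (\<lambda>\<omega>. Sh \<omega> - dft d Ds (r \<omega>) p / Hp)"
    by (simp add: RH fun_eq_iff)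
  finally show ?thesis by (simp add: Sh_def Sd_def Hp_def algebra_simps)
qed

end

theorem proposition3:
  fixes M :: "'a measure" and d :: nat and Ds :: "nat \<Rightarrow> nat" and \<gamma> :: real and L :: nat
    and s n r :: "'a \<Rightarrow> (nat \<Rightarrow> nat) \<Rightarrow> real" and h :: "(nat \<Rightarrow> nat) \<Rightarrow> real"
    and \<phi> \<phi>t :: "nat \<Rightarrow> (nat \<Rightarrow> nat) \<Rightarrow> real"
    and \<Theta> \<Theta>' :: "nat \<Rightarrow> real \<Rightarrow> real"
    and rl :: "nat \<Rightarrow> 'a \<Rightarrow> real"
    and shat rt :: "'a \<Rightarrow> (nat \<Rightarrow> nat) \<Rightarrow> real"
    and Shat :: "'a \<Rightarrow> (nat \<Rightarrow> nat) \<Rightarrow> complex"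
    and gbar :: "nat \<Rightarrow> complex"
  assumes P: "prob_space M"
    and d_pos: "d \<ge> 1" and Ds_pos: "\<forall>i<d. Ds i > 0"
    and gamma_pos: "\<gamma> > 0" and L_pos: "L \<ge> 1"
    and s_meas: "\<forall>x\<in>grid d Ds. (\<lambda>\<omega>. s \<omega> x) \<in> borel_measurable M"
    and s_var: "\<forall>x\<in>grid d Ds. integrable M (\<lambda>\<omega>. (s \<omega> x)\<^sup>2)"
    and n_normal: "\<forall>x\<in>grid d Ds. distributed M lborel (\<lambda>\<omega>. n \<omega> x) (normal_density 0 (sqrt \<gamma>))"
    and n_indep: "prob_space.indep_vars M (\<lambda>_. borel) (\<lambda>x \<omega>. n \<omega> x) (grid d Ds)"
    and sn_indep: "prob_space.indep_var M
         (Pi\<^sub>M (grid d Ds) (\<lambda>_. borel)) (\<lambda>\<omega>. restrict (s \<omega>) (grid d Ds))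
         (Pi\<^sub>M (grid d Ds) (\<lambda>_. borel)) (\<lambda>\<omega>. restrict (n \<omega>) (grid d Ds))"
    and r_def: "r = (\<lambda>\<omega> x. circ_conv d Ds h (s \<omega>) x + n \<omega> x)"
    and rl_def: "rl = (\<lambda>l \<omega>. ip d Ds (r \<omega>) (\<phi> l))"
    and shat_def: "shat = (\<lambda>\<omega> x. \<Sum>l=1..L. \<Theta> l (rl l \<omega>) * \<phi>t l x)"
    and Shat_def: "Shat = (\<lambda>\<omega> p. \<Sum>l=1..L. complex_of_real (\<Theta> l (rl l \<omega>)) * dft d Ds (\<phi>t l) p)"
    and Theta_cont: "\<forall>l\<in>{1..L}. continuous_on UNIV (\<Theta> l)"
    and Theta_diff: "\<forall>l\<in>{1..L}. AE x in lborel. (\<Theta> l has_real_derivative \<Theta>' l x) (at x)"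
    and Theta_ac: "\<forall>l\<in>{1..L}. \<forall>a b. a \<le> b \<longrightarrow>
         set_integrable lborel {a..b} (\<Theta>' l) \<and>
         \<Theta> l b - \<Theta> l a = (\<integral>x\<in>{a..b}. \<Theta>' l x \<partial>lborel)"
    and Theta_growth: "\<forall>l\<in>{1..L}. \<forall>\<alpha> \<tau>. \<alpha> \<noteq> 0 \<longrightarrow>
         ((\<lambda>\<zeta>. \<Theta> l (\<tau> + \<zeta>) * \<zeta>\<^sup>2 * exp (- (\<zeta>\<^sup>2) / (2 * \<alpha>\<^sup>2))) \<longlongrightarrow> 0) at_infinity"
    and Theta_mom: "\<forall>l\<in>{1..L}. integrable M (\<lambda>\<omega>. \<bar>\<Theta> l (rl l \<omega>)\<bar> ^ 3)"
    and Theta'_mom: "\<forall>l\<in>{1..L}. integrable M (\<lambda>\<omega>. \<bar>\<Theta>' l (rl l \<omega>)\<bar> ^ 3)"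
    and H_nz: "\<forall>p\<in>grid d Ds. dft d Ds h p \<noteq> 0"
    and rt_def: "rt = (\<lambda>\<omega> x. Re (idft d Ds (\<lambda>p. dft d Ds (r \<omega>) p / dft d Ds h p) x))"
    and gbar_def: "gbar = (\<lambda>l. (\<Sum>p\<in>grid d Ds. dft d Ds (\<phi> l) p * cnj (dft d Ds (\<phi>t l) p)
                                        / dft d Ds h p) / of_nat (gridsize d Ds))"
  shows "(\<forall>p\<in>grid d Ds.
            (\<integral>\<omega>. (cmod (Shat \<omega> p - dft d Ds (s \<omega>) p))\<^sup>2 \<partial>M)
          = (\<integral>\<omega>. (cmod (Shat \<omega> p - dft d Ds (r \<omega>) p / dft d Ds h p))\<^sup>2 \<partial>M)
            - \<gamma> * real (gridsize d Ds) / (cmod (dft d Ds h p))\<^sup>2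
            + 2 * \<gamma> * (\<Sum>l=1..L. (\<integral>\<omega>. \<Theta>' l (rl l \<omega>) \<partial>M)
                   * Re (dft d Ds (\<phi> l) p * cnj (dft d Ds (\<phi>t l) p) / dft d Ds h p)))
       \<and> (\<forall>l\<in>{1..L}. Im (gbar l) = 0)
       \<and> (\<integral>\<omega>. energy d Ds (\<lambda>x. shat \<omega> x - s \<omega> x) \<partial>M)
          = (\<integral>\<omega>. energy d Ds (\<lambda>x. shat \<omega> x - rt \<omega> x) \<partial>M)
            + \<gamma> / real (gridsize d Ds) *
              (2 * (\<Sum>l=1..L. (\<integral>\<omega>. \<Theta>' l (rl l \<omega>) \<partial>M) * Re (gbar l))
               - (\<Sum>p\<in>grid d Ds. 1 / (cmod (dft d Ds h p))\<^sup>2))"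
proof -
  interpret S: setting M d Ds \<gamma> L s n r h \<phi> \<phi>t \<Theta> \<Theta>' rl
    by (intro setting.intro setting_axioms.intro; fact)
  let ?G = "grid d Ds"
  let ?D = "real (gridsize d Ds)"
  have Dpos: "?D > 0" using gridsize_pos[OF Ds_pos] by simp
  define Q where "Q \<omega> p = dft d Ds (r \<omega>) p / dft d Ds h p" for \<omega> p
  have PW: "\<forall>p\<in>grid d Ds.
            (\<integral>\<omega>. (cmod (Shat \<omega> p - dft d Ds (s \<omega>) p))\<^sup>2 \<partial>M)
          = (\<integral>\<omega>. (cmod (Shat \<omega> p - dft d Ds (r \<omega>) p / dft d Ds h p))\<^sup>2 \<partial>M)
            - \<gamma> * real (gridsize d Ds) / (cmod (dft d Ds h p))\<^sup>2
            + 2 * \<gamma> * (\<Sum>l=1..L. (\<integral>\<omega>. \<Theta>' l (rl l \<omega>) \<partial>M)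
                   * Re (dft d Ds (\<phi> l) p * cnj (dft d Ds (\<phi>t l) p) / dft d Ds h p))"
  proof (intro ballI)
    fix p assume p: "p \<in> grid d Ds"
    show "(\<integral>\<omega>. (cmod (Shat \<omega> p - dft d Ds (s \<omega>) p))\<^sup>2 \<partial>M)
          = (\<integral>\<omega>. (cmod (Shat \<omega> p - dft d Ds (r \<omega>) p / dft d Ds h p))\<^sup>2 \<partial>M)
            - \<gamma> * real (gridsize d Ds) / (cmod (dft d Ds h p))\<^sup>2
            + 2 * \<gamma> * (\<Sum>l=1..L. (\<integral>\<omega>. \<Theta>' l (rl l \<omega>) \<partial>M)
                   * Re (dft d Ds (\<phi> l) p * cnj (dft d Ds (\<phi>t l) p) / dft d Ds h p))"
      unfolding Shat_def by (rule S.pointwise[OF p bspec[OF H_nz p]])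
  qed
  have herm_quot: "(\<lambda>p. F p / K p) (gneg d Ds p) = cnj (F p / K p)"
    if "F (gneg d Ds p) = cnj (F p)" "K (gneg d Ds p) = cnj (K p)" for F K :: "(nat \<Rightarrow> nat) \<Rightarrow> complex" and p
    using that by (simp add: complex_cnj_divide)
  have GB: "\<forall>l\<in>{1..L}. Im (gbar l) = 0"
  proof
    fix l assume l: "l \<in> {1..L}"
    let ?F = "\<lambda>p. dft d Ds (\<phi> l) p * cnj (dft d Ds (\<phi>t l) p)"
    have H: "\<forall>p\<in>?G. (\<lambda>p. ?F p / dft d Ds h p) (gneg d Ds p) = cnj ((\<lambda>p. ?F p / dft d Ds h p) p)"
      using Ds_pos by (auto simp: dft_herm complex_cnj_divide)
    have "Im (\<Sum>p\<in>?G. ?F p / dft d Ds h p * cis (2*pi*phase d Ds (\<lambda>_. 0) p)) = 0"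
      by (rule herm_sum_real[OF Ds_pos H])
    moreover have "phase d Ds (\<lambda>_. 0) p = 0" for p by (simp add: phase_def)
    ultimately show "Im (gbar l) = 0" by (simp add: gbar_def)
  qed
  have dft_shat: "dft d Ds (shat \<omega>) p = Shat \<omega> p" for \<omega> p
    unfolding shat_def Shat_def by (rule dft_lin)
  have rt_real: "complex_of_real (rt \<omega> x) = idft d Ds (Q \<omega>) x" for \<omega> x
  proof -
    have H: "\<forall>p\<in>?G. Q \<omega> (gneg d Ds p) = cnj (Q \<omega> p)"
      using Ds_pos by (auto simp: Q_def dft_herm complex_cnj_divide)
    have "Im (\<Sum>p\<in>?G. Q \<omega> p * cis (2*pi*phase d Ds x p)) = 0"
      by (rule herm_sum_real[OF Ds_pos H])
    then have "Im (idft d Ds (Q \<omega>) x) = 0" by (simp add: idft_def)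
    then show ?thesis by (simp add: rt_def Q_def[abs_def] complex_eq_iff)
  qed
  have dft_rt: "dft d Ds (rt \<omega>) p = Q \<omega> p" if p: "p \<in> ?G" for \<omega> p
  proof -
    have "dft d Ds (rt \<omega>) p = (\<Sum>x\<in>?G. idft d Ds (Q \<omega>) x * cis (-2*pi*phase d Ds x p))"
      by (simp add: dft_def rt_real)
    also have "\<dots> = Q \<omega> p" by (rule inv1[OF Ds_pos p])
    finally show ?thesis .
  qed
  have En1: "energy d Ds (\<lambda>x. shat \<omega> x - s \<omega> x) = (\<Sum>p\<in>?G. (cmod (Shat \<omega> p - dft d Ds (s \<omega>) p))\<^sup>2) / ?D / ?D" for \<omega>
    unfolding energy_def parseval_real[OF Ds_pos, of "\<lambda>x. shat \<omega> x - s \<omega> x"] dft_diff dft_shat ..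
  have En2: "energy d Ds (\<lambda>x. shat \<omega> x - rt \<omega> x) = (\<Sum>p\<in>?G. (cmod (Shat \<omega> p - Q \<omega> p))\<^sup>2) / ?D / ?D" for \<omega>
    unfolding energy_def parseval_real[OF Ds_pos, of "\<lambda>x. shat \<omega> x - rt \<omega> x"] dft_diff dft_shat
    by (intro arg_cong2[where f="(/)"] sum.cong refl) (simp add: dft_rt)
  have l2A: "l2 M (\<lambda>\<omega>. Shat \<omega> p - dft d Ds (s \<omega>) p)" for p
    unfolding Shat_def by (intro l2_diff S.l2_Sh S.l2_S)
  have l2B: "l2 M (\<lambda>\<omega>. Shat \<omega> p - Q \<omega> p)" for p
  proof -
    have "l2 M (\<lambda>\<omega>. (dft d Ds h p * dft d Ds (s \<omega>) p + dft d Ds (n \<omega>) p) / dft d Ds h p)"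
      by (intro l2_div l2_add l2_scale S.l2_S S.l2_N)
    then have "l2 M (\<lambda>\<omega>. Q \<omega> p)" by (simp add: Q_def S.R_eq)
    then show ?thesis unfolding Shat_def by (intro l2_diff S.l2_Sh)
  qed
  have E1: "(\<integral>\<omega>. energy d Ds (\<lambda>x. shat \<omega> x - s \<omega> x) \<partial>M)
      = (\<Sum>p\<in>?G. (\<integral>\<omega>. (cmod (Shat \<omega> p - dft d Ds (s \<omega>) p))\<^sup>2 \<partial>M)) / ?D / ?D"
    unfolding En1 using l2A by (simp add: l2_int integral_sum)
  have E2: "(\<integral>\<omega>. energy d Ds (\<lambda>x. shat \<omega> x - rt \<omega> x) \<partial>M)
      = (\<Sum>p\<in>?G. (\<integral>\<omega>. (cmod (Shat \<omega> p - dft d Ds (r \<omega>) p / dft d Ds h p))\<^sup>2 \<partial>M)) / ?D / ?D"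
    unfolding En2 using l2B by (simp add: l2_int integral_sum Q_def)
  have SRe: "(\<Sum>p\<in>?G. Re (dft d Ds (\<phi> l) p * cnj (dft d Ds (\<phi>t l) p) / dft d Ds h p)) = ?D * Re (gbar l)" for l
  proof -
    have "Re (gbar l) = (\<Sum>p\<in>?G. Re (dft d Ds (\<phi> l) p * cnj (dft d Ds (\<phi>t l) p) / dft d Ds h p)) / ?D"
      by (simp add: gbar_def)
    then show ?thesis using Dpos by simp
  qed
  have E3: "(\<integral>\<omega>. energy d Ds (\<lambda>x. shat \<omega> x - s \<omega> x) \<partial>M)
          = (\<integral>\<omega>. energy d Ds (\<lambda>x. shat \<omega> x - rt \<omega> x) \<partial>M)
            + \<gamma> / real (gridsize d Ds) *
              (2 * (\<Sum>l=1..L. (\<integral>\<omega>. \<Theta>' l (rl l \<omega>) \<partial>M) * Re (gbar l))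
               - (\<Sum>p\<in>grid d Ds. 1 / (cmod (dft d Ds h p))\<^sup>2))"
  proof -
    define A where "A p = (\<integral>\<omega>. (cmod (Shat \<omega> p - dft d Ds (s \<omega>) p))\<^sup>2 \<partial>M)" for p
    define B where "B p = (\<integral>\<omega>. (cmod (Shat \<omega> p - dft d Ds (r \<omega>) p / dft d Ds h p))\<^sup>2 \<partial>M)" for p
    define e where "e l = (\<integral>\<omega>. \<Theta>' l (rl l \<omega>) \<partial>M)" for l
    define R where "R l p = Re (dft d Ds (\<phi> l) p * cnj (dft d Ds (\<phi>t l) p) / dft d Ds h p)" for l p
    define K where "K p = 1 / (cmod (dft d Ds h p))\<^sup>2" for p
    have pw: "A p = B p - \<gamma> * ?D * K p + 2 * \<gamma> * (\<Sum>l=1..L. e l * R l p)" if "p \<in> ?G" for p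
      using PW that unfolding A_def B_def e_def R_def K_def by simp
    have "(\<Sum>p\<in>?G. A p) = (\<Sum>p\<in>?G. B p - \<gamma> * ?D * K p + 2 * \<gamma> * (\<Sum>l=1..L. e l * R l p))"
      by (rule sum.cong[OF refl pw])
    also have "\<dots> = (\<Sum>p\<in>?G. B p) - \<gamma> * ?D * (\<Sum>p\<in>?G. K p) + 2 * \<gamma> * (\<Sum>p\<in>?G. \<Sum>l=1..L. e l * R l p)"
      by (simp only: sum.distrib sum_subtractf sum_distrib_left)
    also have "(\<Sum>p\<in>?G. \<Sum>l=1..L. e l * R l p) = (\<Sum>l=1..L. e l * (?D * Re (gbar l)))"
      by (subst sum.swap) (simp only: sum_distrib_left[symmetric] R_def SRe)
    finally have "(\<Sum>p\<in>?G. A p) = (\<Sum>p\<in>?G. B p) - \<gamma> * ?D * (\<Sum>p\<in>?G. K p) + 2 * \<gamma> * (\<Sum>l=1..L. e l * (?D * Re (gbar l)))" .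
    moreover have "(\<Sum>l=1..L. e l * (?D * Re (gbar l))) = ?D * (\<Sum>l=1..L. e l * Re (gbar l))"
      by (simp add: sum_distrib_left ac_simps)
    ultimately have "(\<Sum>p\<in>?G. A p) / ?D / ?D = (\<Sum>p\<in>?G. B p) / ?D / ?D + \<gamma> / ?D * (2 * (\<Sum>l=1..L. e l * Re (gbar l)) - (\<Sum>p\<in>?G. K p))"
      using Dpos by (simp add: field_simps)
    then show ?thesis unfolding E1 E2 A_def[symmetric] B_def[symmetric] e_def[symmetric] K_def[symmetric] .
  qed
  show ?thesis using PW GB E3 by blast
qed

end
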